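(* Let $d\ge1$, $1<\alpha<2$, $T>0$, $x_0\in\mathbb{R}^d$, and let $L^\alpha_t$ be a $d$-dimensional symmetric $\alpha$-stable Lévy motion. Let $f:\mathbb{R}^d\to\mathbb{R}^d$ be Lipschitz continuous, $g(x_0)\in\mathbb{R}$ a constant, and $Y$ the solution of $$Y(t)=x_0+\int_0^t f(Y(s))\,ds+g(x_0)L^\alpha_t,\qquad t\in[0,T].$$ For $m\in\mathbb{N}^+$ let $f_m:\mathbb{R}^d\to\mathbb{R}^d$ (e.g. two-layer neural networks of width $m$) and constants $g_m(x_0)\in\mathbb{R}$ satisfy: (i) there is $K>0$ with $|f_m(x_1)-f_m(x_2)|\le K|x_1-x_2|$ for all $x_1,x_2\in\mathbb{R}^d$ and all $m$; (ii) $\|f_m-f\|_{L^2(D)}\to0$ as $m\to\infty$ for every compact $D\subset\mathbb{R}^d$, and $g_m(x_0)\to g(x_0)$. For $\Delta t\in(0,1)$ with $T/\Delta t\in\mathbb{N}$, let $X^{(m)}=X^{(m,\Delta t)}$ be the continuous-time Euler–Maruyama process $$X^{(m)}(t)=x_0+\int_0^t f_m(\overline{X^{(m)}}(s))\,ds+g_m(x_0)L^\alpha_t,\qquad t\in[0,T],$$ where $\overline{X^{(m)}}(t)=X^{(m)}(k\Delta t)$ for $t\in[k\Delta t,(k+1)\Delta t)$. Then $X^{(m)}\to Y$ in probability with respect to the Skorokhod distance $d_T$ on $\mathbb{D}_{\mathbb{R}^d}[0,T]$, in the sense that for every $\delta>0$, $$\mathbb{P}\big(d_T(Y,X^{(m,\Delta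 t)})>\delta\big)\to0\quad\text{as } m\to\infty\text{ and }\Delta t\to0.$$
   Context: A symmetric $\alpha$-stable Lévy motion $L^\alpha_t$ ($0<\alpha<2$) is a process with $L^\alpha_0=0$ a.s., independent increments, $L^\alpha_t-L^\alpha_s\sim S_\alpha((t-s)^{1/\alpha},0,0)$ for $s<t$, and stochastically continuous paths. The diffusion coefficient $g_m(x_0)$ is interpreted as the $d\times d$ diagonal matrix $g_m(x_0)I_d$ (likewise for $g(x_0)$). $\mathbb{D}_{\mathbb{R}^d}[0,T]$ is the Skorokhod space of càdlàg functions $[0,T]\to\mathbb{R}^d$ with the Skorokhod metric $d_T$. $L^2(D)$ is with respect to Lebesgue measure; $|\cdot|$ is the Euclidean norm. *)

theory Defs
  imports "HOL-Probability.Probability"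
begin

definition cadlag_on :: "real \<Rightarrow> (real \<Rightarrow> 'b::metric_space) \<Rightarrow> bool" where
  "cadlag_on T x \<longleftrightarrow>
     (\<forall>t\<in>{0..<T}. (x \<longlongrightarrow> x t) (at_right t)) \<and>
     (\<forall>t\<in>{0<..T}. \<exists>l. (x \<longlongrightarrow> l) (at_left t))"

definition time_changes :: "real \<Rightarrow> (real \<Rightarrow> real) set" where
  "time_changes T = {lam. strict_mono_on {0..T} lam \<and> continuous_on {0..T} lam \<and> lam ` {0..T} = {0..T}}"

definition skorokhod_dist :: "real \<Rightarrow> (real \<Rightarrow> 'b::real_normed_vector) \<Rightarrow> (real \<Rightarrow> 'b) \<Rightarrow> real" where
  "skorokhod_dist T x y =
     Inf {max (SUP t\<in>{0..T}. \<bar>lam t - t\<bar>) (SUP t\<in>{0..T}. norm (x t - y (lam t))) | lam. lam \<in> time_changes T}"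

text \<open>d-dimensional symmetric alpha-stable Levy motion: components of each increment
  L_t - L_s are independent S_alpha((t-s)^(1/alpha),0,0), expressed via the characteristic function
  E exp(i u.(L_t - L_s)) = exp(-(t-s) * sum_j |u_j|^alpha).\<close>
definition sym_stable_levy_motion ::
    "'a measure \<Rightarrow> real \<Rightarrow> (real \<Rightarrow> 'a \<Rightarrow> real^'n) \<Rightarrow> bool" where
  "sym_stable_levy_motion M \<alpha> L \<longleftrightarrow>
     prob_space M \<and>
     (\<forall>t\<ge>0. L t \<in> borel_measurable M) \<and>
     (AE \<omega> in M. L 0 \<omega> = 0) \<and>
     (\<forall>(ts::nat \<Rightarrow> real) n. (\<forall>i<n. 0 \<le> ts i \<and> ts i < ts (Suc i)) \<longrightarrow>
        prob_space.indep_vars M (\<lambda>_. borel) (\<lambda>i \<omega>. L (ts (Suc i)) \<omega> - L (ts i) \<omega>) {..<n}) \<and>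
     (\<forall>s t u. 0 \<le> s \<and> s < t \<longrightarrow>
        integral\<^sup>L M (\<lambda>\<omega>. cis (u \<bullet> (L t \<omega> - L s \<omega>)))
          = complex_of_real (exp (- (t - s) * (\<Sum>j\<in>UNIV. \<bar>u $ j\<bar> powr \<alpha>)))) \<and>
     (\<forall>t\<ge>0. \<forall>\<epsilon>>0. ((\<lambda>s. measure M {\<omega>\<in>space M. dist (L s \<omega>) (L t \<omega>) > \<epsilon>}) \<longlongrightarrow> 0)
                      (at t within {0..}))"

end

theory Submission
  imports Defs
begin


lemma geom_aux: fixes c :: real shows "c * (\<Sum>j<k. (1+c)^j) = (1+c)^k - 1"
  by (induction k) (auto simp: algebra_simps)

lemma dgron:
  fixes u :: "nat \<Rightarrow> real"
  assumes A: "A \<ge> 0" and c: "c \<ge> 0" and H: "\<And>k. k \<le> N \<Longrightarrow> u k \<le> A + c * (\<Sum>j<k. u j)"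
  shows "k \<le> N \<Longrightarrow> u k \<le> A * (1+c)^k"
proof (induction k rule: less_induct)
  case (less k)
  have "(\<Sum>j<k. u j) \<le> (\<Sum>j<k. A * (1+c)^j)"
    using less by (intro sum_mono) auto
  hence "u k \<le> A + c * (\<Sum>j<k. A * (1+c)^j)"
    using H[OF less.prems] c by (meson add_left_mono mult_left_mono order_trans)
  also have "\<dots> = A + A * (c * (\<Sum>j<k. (1+c)^j))"
    by (simp add: sum_distrib_left algebra_simps)
  also have "\<dots> = A * (1+c)^k"
    unfolding geom_aux by (simp add: algebra_simps)
  finally show ?case .
qed

lemma pow_le_exp: fixes c :: real assumes "c \<ge> 0" shows "(1+c)^k \<le> exp (c * k)"
proof -
  have "(1+c)^k \<le> (exp c)^k" using assms by (intro power_mono) (auto simp: exp_ge_add_one_self add.commute)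
  thus ?thesis by (simp add: exp_of_nat_mult[symmetric] mult.commute)
qed



lemma exp_integral:
  fixes C t :: real assumes C: "C > 0" and t: "0 \<le> t"
  shows "((\<lambda>s. exp (C * s)) has_integral (exp (C*t) - 1)/C) {0..t}"
proof -
  have "((\<lambda>s. exp (C * s)) has_integral (exp (C*t)/C - exp (C*0)/C)) {0..t}"
  proof (rule fundamental_theorem_of_calculus[OF t])
    fix x assume "x \<in> {0..t}"
    show "((\<lambda>s. exp (C * s)/C) has_vector_derivative exp (C*x)) (at x within {0..t})"
      using C by (auto intro!: derivative_eq_intros simp: has_real_derivative_iff_has_vector_derivative[symmetric])
  qed
  thus ?thesis by (simp add: diff_divide_distrib)
qed

lemma cgron:
  fixes \<phi> :: "real \<Rightarrow> real"
  assumes C: "C > 0" and A: "A \<ge> 0" and T: "T \<ge> 0"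
    and int: "\<phi> integrable_on {0..T}"
    and nn: "\<And>t. t \<in> {0..T} \<Longrightarrow> 0 \<le> \<phi> t"
    and bd: "\<And>t. t \<in> {0..T} \<Longrightarrow> \<phi> t \<le> Mb"
    and H: "\<And>t. t \<in> {0..T} \<Longrightarrow> \<phi> t \<le> A + C * integral {0..t} \<phi>"
  shows "t \<in> {0..T} \<Longrightarrow> \<phi> t \<le> 2 * A * exp (2*C*T)"
proof -
  define S where "S = (SUP t\<in>{0..T}. exp (-(2*C*t)) * \<phi> t)"
  have bdd: "bdd_above ((\<lambda>t. exp (-(2*C*t)) * \<phi> t) ` {0..T})"
  proof (rule bdd_aboveI2)
    fix t assume t: "t \<in> {0..T}"
    have "exp (-(2*C*t)) \<le> 1" using C t by auto
    hence "exp (-(2*C*t)) * \<phi> t \<le> 1 * \<phi> t" using nn[OF t] by (intro mult_right_mono) auto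
    thus "exp (-(2*C*t)) * \<phi> t \<le> Mb" using bd[OF t] by simp
  qed
  have le_S: "exp (-(2*C*t)) * \<phi> t \<le> S" if "t \<in> {0..T}" for t
    unfolding S_def using bdd that by (rule cSUP_upper2) auto
  have S0: "S \<ge> 0" using le_S[of 0] nn[of 0] T by simp
  have phi_le: "\<phi> s \<le> S * exp (2*C * s)" if "s \<in> {0..T}" for s
  proof -
    have "exp (-(2*C * s)) * \<phi> s * exp (2*C * s) \<le> S * exp (2*C * s)"
      using le_S[OF that] by (intro mult_right_mono) auto
    thus ?thesis by (simp add: exp_minus field_simps)
  qed
  have main: "exp (-(2*C*t)) * \<phi> t \<le> A + S/2" if t: "t \<in> {0..T}" for t
  proof -
    have sub: "{0..t} \<subseteq> {0..T}" using t by auto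
    have ei: "((\<lambda>s. S * exp ((2*C) * s)) has_integral S * ((exp ((2*C)*t) - 1)/(2*C))) {0..t}"
      using exp_integral[of "2*C" t] C t by (intro has_integral_mult_right) auto
    have "integral {0..t} \<phi> \<le> integral {0..t} (\<lambda>s. S * exp ((2*C) * s))"
      using int sub phi_le ei by (intro integral_le) (auto intro: integrable_on_subinterval)
    also have "\<dots> = S * ((exp ((2*C)*t) - 1)/(2*C))" using ei by (rule integral_unique)
    finally have i: "integral {0..t} \<phi> \<le> S * ((exp ((2*C)*t) - 1)/(2*C))" .
    have "\<phi> t \<le> A + C * (S * ((exp ((2*C)*t) - 1)/(2*C)))"
      using H[OF t] i C by (smt (verit) mult_left_mono)
    also have "\<dots> = A + S * (exp (2*C*t) - 1)/2" using C by (simp add: field_simps)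
    finally have p: "\<phi> t \<le> A + S * (exp (2*C*t) - 1)/2" .
    have e1: "exp (-(2*C*t)) \<le> 1" "exp (-(2*C*t)) > 0" using C t by auto
    have "exp (-(2*C*t)) * \<phi> t \<le> exp (-(2*C*t)) * (A + S * (exp (2*C*t) - 1)/2)"
      using p e1 by (intro mult_left_mono) auto
    also have "\<dots> = exp (-(2*C*t)) * A + S/2 - exp (-(2*C*t)) * S / 2"
      by (simp add: field_simps exp_minus)
    also have "\<dots> \<le> A + S/2"
    proof -
      have "exp (-(2*C*t)) * A \<le> A" using e1 A by (simp add: mult_left_le_one_le)
      moreover have "exp (-(2*C*t)) * S / 2 \<ge> 0" using e1 S0 by simp
      ultimately show ?thesis by linarith
    qed
    finally show ?thesis .
  qed
  have "S \<le> A + S/2" unfolding S_def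
    using T by (intro cSUP_least) (use main S_def in auto)
  hence S2: "S \<le> 2*A" by simp
  assume t: "t \<in> {0..T}"
  have "\<phi> t \<le> S * exp (2*C*t)" by (rule phi_le[OF t])
  also have "\<dots> \<le> 2*A * exp (2*C*T)"
    using S2 S0 t C by (intro mult_mono) auto
  finally show ?thesis .
qed



lemma rc_nbhd:
  fixes l :: "real \<Rightarrow> 'b::real_normed_vector"
  assumes "(l \<longlongrightarrow> l a) (at_right a)" "e > 0"
  shows "\<exists>b>a. \<forall>y. a \<le> y \<and> y < b \<longrightarrow> norm (l y - l a) < e"
proof -
  have "eventually (\<lambda>y. dist (l y) (l a) < e) (at_right a)"
    using assms tendsto_iff by blast
  then obtain b where "b > a" "\<forall>y>a. y < b \<longrightarrow> dist (l y) (l a) < e"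
    unfolding eventually_at_right_field by blast
  thus ?thesis using assms(2) by (metis dist_norm order_le_less right_minus_eq norm_zero)
qed

lemma ll_nbhd:
  fixes l :: "real \<Rightarrow> 'b::real_normed_vector"
  assumes "(l \<longlongrightarrow> L) (at_left a)" "e > 0"
  shows "\<exists>b<a. \<forall>y. b < y \<and> y < a \<longrightarrow> norm (l y - L) < e"
proof -
  have "eventually (\<lambda>y. dist (l y) L < e) (at_left a)"
    using assms tendsto_iff by blast
  then obtain b where "b < a" "\<forall>y>b. y < a \<longrightarrow> dist (l y) L < e"
    unfolding eventually_at_left_field by blast
  thus ?thesis by (metis dist_norm)
qed

lemma tri2:
  fixes a b L :: "'b::real_normed_vector"
  assumes "norm (a - L) < e/2" "norm (b - L) < e/2"
  shows "norm (a - b) \<le> e"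
proof -
  have "norm (a - b) \<le> norm (a - L) + norm (b - L)"
    by (metis norm_diff_triangle_le norm_minus_commute order_refl)
  thus ?thesis using assms by linarith
qed

definition goodp :: "(real \<Rightarrow> 'b::real_normed_vector) \<Rightarrow> real \<Rightarrow> real \<Rightarrow> bool" where
  "goodp l e \<tau> \<longleftrightarrow> (\<exists>P. finite P \<and> (\<forall>s t. 0 \<le> s \<and> s \<le> t \<and> t < \<tau> \<and> (\<forall>p\<in>P. \<not>(s < p \<and> p \<le> t))
      \<longrightarrow> norm (l t - l s) \<le> e))"

lemma goodp_mono: "goodp l e \<tau> \<Longrightarrow> \<tau>' \<le> \<tau> \<Longrightarrow> goodp l e \<tau>'"
  unfolding goodp_def by (meson order_less_le_trans)

lemma cadlag_partition:
  fixes l :: "real \<Rightarrow> 'b::real_normed_vector"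
  assumes cad: "cadlag_on T l" and T: "T > 0" and e: "e > 0"
  shows "goodp l e T"
proof -
  have rc: "\<And>t. t \<in> {0..<T} \<Longrightarrow> (l \<longlongrightarrow> l t) (at_right t)"
    and ll: "\<And>t. t \<in> {0<..T} \<Longrightarrow> \<exists>L. (l \<longlongrightarrow> L) (at_left t)"
    using cad unfolding cadlag_on_def by auto
  define S where "S = {\<tau>\<in>{0..T}. goodp l e \<tau>}"
  define \<sigma> where "\<sigma> = Sup S"
  have g0: "goodp l e 0" unfolding goodp_def by (rule exI[of _ "{}"]) auto
  have S0: "0 \<in> S" using g0 S_def T by auto
  have bddS: "bdd_above S" unfolding S_def by (rule bdd_aboveI[of _ T]) auto
  have sigT: "\<sigma> \<le> T" unfolding \<sigma>_def using S0 by (intro cSup_least) (auto simp: S_def)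
  have geS: "\<tau> \<le> \<sigma>" if "\<tau> \<in> S" for \<tau> unfolding \<sigma>_def using bddS that by (simp add: cSup_upper)
  have sig_pos: "\<sigma> > 0"
  proof -
    obtain b where b: "b > 0" "\<forall>y. 0 \<le> y \<and> y < b \<longrightarrow> norm (l y - l 0) < e/2"
      using rc_nbhd[OF rc[of 0] half_gt_zero[OF e]] T by auto
    have "goodp l e (min b T)" unfolding goodp_def
    proof (rule exI[of _ "{}"], safe)
      fix s t assume "0 \<le> s" "s \<le> t" "t < min b T"
      hence "norm (l t - l 0) < e/2" "norm (l s - l 0) < e/2" using b by auto
      thus "norm (l t - l s) \<le> e" by (rule tri2)
    qed
    hence "min b T \<in> S" using S_def b T by auto
    thus ?thesis using geS[of "min b T"] b T by linarith
  qed
  have gsig: "goodp l e \<sigma>"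
  proof -
    obtain L where L: "(l \<longlongrightarrow> L) (at_left \<sigma>)" using ll sig_pos sigT by auto
    obtain b where b: "b < \<sigma>" "\<forall>y. b < y \<and> y < \<sigma> \<longrightarrow> norm (l y - L) < e/2"
      using ll_nbhd[OF L half_gt_zero[OF e]] by auto
    define c where "c = max 0 b"
    have c: "c < \<sigma>" using b sig_pos c_def by auto
    obtain \<tau> where tau: "\<tau> \<in> S" "c < \<tau>"
      using less_cSup_iff[of S c] S0 bddS c \<sigma>_def by auto
    have "goodp l e \<tau>" using tau S_def by auto
    then obtain P where P: "finite P" "\<forall>s t. 0 \<le> s \<and> s \<le> t \<and> t < \<tau> \<and> (\<forall>p\<in>P. \<not>(s < p \<and> p \<le> t))
      \<longrightarrow> norm (l t - l s) \<le> e" unfolding goodp_def by blast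
    define p where "p = (c + \<tau>)/2"
    have p: "c < p" "p < \<tau>" using tau p_def by auto
    have tsig: "\<tau> \<le> \<sigma>" using geS tau by auto
    show ?thesis unfolding goodp_def
    proof (rule exI[of _ "insert p P"], intro conjI allI impI)
      show "finite (insert p P)" using P by simp
    next
      fix s t assume H: "0 \<le> s \<and> s \<le> t \<and> t < \<sigma> \<and> (\<forall>q\<in>insert p P. \<not> (s < q \<and> q \<le> t))"
      hence st: "0 \<le> s" "s \<le> t" "t < \<sigma>" and np: "\<forall>q\<in>insert p P. \<not> (s < q \<and> q \<le> t)" by auto
      show "norm (l t - l s) \<le> e"
      proof (cases "t < \<tau>")
        case True thus ?thesis using P st np by auto
      next
        case False
        hence "p \<le> s" using np p by force
        hence "b < s" "b < t" using p c_def st by auto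
        hence "norm (l t - L) < e/2" "norm (l s - L) < e/2" using b st by auto
        thus ?thesis by (rule tri2)
      qed
    qed
  qed
  have "\<sigma> = T"
  proof (rule ccontr)
    assume "\<sigma> \<noteq> T"
    hence sT: "\<sigma> < T" using sigT by auto
    obtain b where b: "b > \<sigma>" "\<forall>y. \<sigma> \<le> y \<and> y < b \<longrightarrow> norm (l y - l \<sigma>) < e/2"
      using rc_nbhd[OF rc[of \<sigma>] half_gt_zero[OF e]] sT sig_pos by auto
    obtain P where P: "finite P" "\<forall>s t. 0 \<le> s \<and> s \<le> t \<and> t < \<sigma> \<and> (\<forall>p\<in>P. \<not>(s < p \<and> p \<le> t))
      \<longrightarrow> norm (l t - l s) \<le> e" using gsig unfolding goodp_def by blast
    define \<tau> where "\<tau> = min T b"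
    have "goodp l e \<tau>" unfolding goodp_def
    proof (rule exI[of _ "insert \<sigma> P"], intro conjI allI impI)
      show "finite (insert \<sigma> P)" using P by simp
    next
      fix s t assume H: "0 \<le> s \<and> s \<le> t \<and> t < \<tau> \<and> (\<forall>q\<in>insert \<sigma> P. \<not> (s < q \<and> q \<le> t))"
      hence st: "0 \<le> s" "s \<le> t" "t < \<tau>" and np: "\<forall>q\<in>insert \<sigma> P. \<not> (s < q \<and> q \<le> t)" by auto
      show "norm (l t - l s) \<le> e"
      proof (cases "t < \<sigma>")
        case True thus ?thesis using P st np by auto
      next
        case False
        hence "\<sigma> \<le> s" using np by force
        hence "norm (l t - l \<sigma>) < e/2" "norm (l s - l \<sigma>) < e/2" using b st \<tau>_def False by auto
        thus ?thesis by (rule tri2)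
      qed
    qed
    hence "\<tau> \<in> S" using S_def \<tau>_def sig_pos sT b by auto
    hence "\<tau> \<le> \<sigma>" by (rule geS)
    thus False using \<tau>_def sT b by auto
  qed
  thus ?thesis using gsig by simp
qed



lemma skor_le:
  fixes x y :: "real \<Rightarrow> 'b::real_normed_vector"
  assumes T: "T \<ge> 0"
    and bx: "\<And>t. t \<in> {0..T} \<Longrightarrow> norm (x t) \<le> Bx"
    and hy: "\<And>t. t \<in> {0..T} \<Longrightarrow> norm (y t) \<le> By"
    and c: "\<And>t. t \<in> {0..T} \<Longrightarrow> norm (x t - y t) \<le> c"
  shows "skorokhod_dist T x y \<le> c"
proof -
  define E where "E = (\<lambda>lam::real\<Rightarrow>real. max (SUP t\<in>{0..T}. \<bar>lam t - t\<bar>) (SUP t\<in>{0..T}. norm (x t - y (lam t))))"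
  have id: "(\<lambda>t. t) \<in> time_changes T"
    unfolding time_changes_def by (auto simp: strict_mono_on_def)
  have ne: "{0..T} \<noteq> {}" using T by auto
  have Eid: "E (\<lambda>t. t) \<le> c"
  proof -
    have "(SUP t\<in>{0..T}. \<bar>(t::real) - t\<bar>) = 0" using ne by simp
    moreover have "(SUP t\<in>{0..T}. norm (x t - y t)) \<le> c"
      using ne c by (intro cSUP_least) auto
    moreover have "0 \<le> c" using c[of 0] T by (smt (verit) atLeastAtMost_iff norm_ge_zero)
    ultimately show ?thesis unfolding E_def by simp
  qed
  have Enn: "0 \<le> E lam" if lam: "lam \<in> time_changes T" for lam
  proof -
    have im: "lam ` {0..T} = {0..T}" using lam unfolding time_changes_def by auto
    have "bdd_above ((\<lambda>t. norm (x t - y (lam t))) ` {0..T})"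
    proof (rule bdd_aboveI2)
      fix t assume t: "t \<in> {0..T}"
      hence "lam t \<in> {0..T}" using im by auto
      hence "norm (y (lam t)) \<le> By" by (rule hy)
      moreover have "norm (x t) \<le> Bx" using t by (rule bx)
      ultimately show "norm (x t - y (lam t)) \<le> Bx + By"
        by (smt (verit) norm_triangle_ineq4)
    qed
    hence "norm (x 0 - y (lam 0)) \<le> (SUP t\<in>{0..T}. norm (x t - y (lam t)))"
      using T by (intro cSUP_upper) auto
    thus ?thesis unfolding E_def by (smt (verit) norm_ge_zero)
  qed
  have "skorokhod_dist T x y = Inf (E ` time_changes T)"
    unfolding skorokhod_dist_def E_def by (simp add: image_def setcompr_eq_image)
  also have "\<dots> \<le> E (\<lambda>t. t)"
    using id Enn by (intro cInf_lower) (auto intro!: bdd_belowI[of _ 0])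
  finally show ?thesis using Eid by simp
qed

lemma seg_int:
  fixes F :: "real \<Rightarrow> 'b::banach"
  assumes H: "\<And>t. t \<in> {0..T} \<Longrightarrow> (F has_integral G t) {0..t}"
    and ab: "0 \<le> a" "a \<le> b" "b \<le> T"
  shows "(F has_integral (G b - G a)) {a..b}"
proof -
  have ib: "F integrable_on {0..b}" using H[of b] ab by (auto simp: integrable_on_def)
  have "integral {0..a} F + integral {a..b} F = integral {0..b} F"
    by (rule Henstock_Kurzweil_Integration.integral_combine[OF ab(1) ab(2) ib])
  moreover have "integral {0..a} F = G a" "integral {0..b} F = G b"
    using H ab by (auto intro: integral_unique)
  moreover have "F integrable_on {a..b}" using ib ab by (intro integrable_subinterval_real[OF ib]) auto
  ultimately show ?thesis by (metis add_diff_cancel_left' has_integral_integrable_integral)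
qed



lemma floor_cell:
  assumes dt: "dt > 0" and s: "real j * dt \<le> s" "s < real (Suc j) * dt"
  shows "dt * of_int \<lfloor>s / dt\<rfloor> = real j * dt"
proof -
  have "real j \<le> s / dt" "s / dt < real j + 1" using s dt by (auto simp: field_simps)
  hence "\<lfloor>s / dt\<rfloor> = int j" by (intro floor_unique) auto
  thus ?thesis by simp
qed

lemma core_X:
  fixes l X :: "real \<Rightarrow> real^'n" and fm :: "real^'n \<Rightarrow> real^'n" and x0 :: "real^'n"
  assumes T: "T > 0" and n: "n \<ge> 1" and dt: "dt = T / real n"
    and lB: "\<And>t. t \<in> {0..T} \<Longrightarrow> norm (l t) \<le> B"
    and K: "K > 0" and fmlip: "\<And>x y. norm (fm x - fm y) \<le> K * norm (x - y)"
    and F0: "norm (fm 0) \<le> F0" and G: "\<bar>gm\<bar> \<le> G"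
    and Xeq: "\<And>t. t \<in> {0..T} \<Longrightarrow> ((\<lambda>s. fm (X (dt * of_int \<lfloor>s / dt\<rfloor>))) has_integral (X t - x0 - gm *\<^sub>R l t)) {0..t}"
  shows "(\<forall>j<n. \<forall>t. real j * dt \<le> t \<and> t \<le> real (Suc j) * dt \<longrightarrow>
            X t = X (real j * dt) + gm *\<^sub>R (l t - l (real j * dt)) + (t - real j * dt) *\<^sub>R fm (X (real j * dt)))
       \<and> (\<forall>k\<le>n. X (real k * dt) = x0 + gm *\<^sub>R l (real k * dt) + (\<Sum>i<k. dt *\<^sub>R fm (X (real i * dt))))
       \<and> (\<forall>k\<le>n. norm (X (real k * dt)) \<le> (norm x0 + G * B + T * F0) * exp (K * T))"
proof -
  have dtp: "dt > 0" using T n dt by auto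
  have ndt: "real n * dt = T" using n dt by auto
  have tk: "0 \<le> real k * dt" "k \<le> n \<Longrightarrow> real k * dt \<le> T" for k
    using dtp ndt by (auto intro: mult_right_mono simp flip: ndt)
  define a where "a = (\<lambda>k. X (real k * dt))"
  have step: "X t = a j + gm *\<^sub>R (l t - l (real j * dt)) + (t - real j * dt) *\<^sub>R fm (a j)"
    if j: "j < n" and t: "real j * dt \<le> t" "t \<le> real (Suc j) * dt" for j t
  proof -
    have tT: "t \<le> T" using t(2) tk(2)[of "Suc j"] j by auto
    have c: "((\<lambda>s. fm (a j)) has_integral ((t - real j * dt) *\<^sub>R fm (a j))) {real j * dt..t}"
      using has_integral_const_real[of "fm (a j)" "real j * dt" t] t by simp
    have "((\<lambda>s. fm (X (dt * of_int \<lfloor>s / dt\<rfloor>))) has_integral ((t - real j * dt) *\<^sub>R fm (a j))) {real j * dt..t}"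
    proof (rule has_integral_spike_finite[OF _ _ c])
      show "finite {real (Suc j) * dt}" by simp
      fix s assume s: "s \<in> {real j * dt..t} - {real (Suc j) * dt}"
      hence "real j * dt \<le> s" "s < real (Suc j) * dt" using t by auto
      hence "dt * of_int \<lfloor>s / dt\<rfloor> = real j * dt" by (rule floor_cell[OF dtp])
      thus "fm (X (dt * of_int \<lfloor>s / dt\<rfloor>)) = fm (a j)" unfolding a_def by (simp only:)
    qed
    moreover have "((\<lambda>s. fm (X (dt * of_int \<lfloor>s / dt\<rfloor>))) has_integral
        ((X t - x0 - gm *\<^sub>R l t) - (X (real j * dt) - x0 - gm *\<^sub>R l (real j * dt)))) {real j * dt..t}"
      by (rule seg_int[where G="\<lambda>t. X t - x0 - gm *\<^sub>R l t" and T=T, OF Xeq]) (use tk t tT in auto)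
    ultimately have "(t - real j * dt) *\<^sub>R fm (a j) = (X t - x0 - gm *\<^sub>R l t) - (X (real j * dt) - x0 - gm *\<^sub>R l (real j * dt))"
      by (rule has_integral_unique)
    thus ?thesis unfolding a_def by (simp add: algebra_simps)
  qed
  have a0: "a 0 = x0 + gm *\<^sub>R l 0"
  proof -
    have "((\<lambda>s. fm (X (dt * of_int \<lfloor>s / dt\<rfloor>))) has_integral (X 0 - x0 - gm *\<^sub>R l 0)) {0..0}"
      using Xeq[of 0] T by auto
    hence "((\<lambda>s. fm (X (dt * of_int \<lfloor>s / dt\<rfloor>))) has_integral (X 0 - x0 - gm *\<^sub>R l 0)) {0}" by simp
    hence "X 0 - x0 - gm *\<^sub>R l 0 = 0" using has_integral_refl(2) by (rule has_integral_unique)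
    thus ?thesis unfolding a_def by (simp add: algebra_simps)
  qed
  have closed: "a k = x0 + gm *\<^sub>R l (real k * dt) + (\<Sum>i<k. dt *\<^sub>R fm (a i))" if "k \<le> n" for k
    using that
  proof (induction k)
    case 0 thus ?case using a0 by simp
  next
    case (Suc k)
    have "a (Suc k) = a k + gm *\<^sub>R (l (real (Suc k) * dt) - l (real k * dt)) + (real (Suc k) * dt - real k * dt) *\<^sub>R fm (a k)"
      using step[of k "real (Suc k) * dt"] Suc.prems dtp unfolding a_def by (auto intro: mult_right_mono)
    also have "real (Suc k) * dt - real k * dt = dt" by (simp add: algebra_simps)
    finally show ?case using Suc by (simp add: algebra_simps)
  qed
  define AX where "AX = norm x0 + G * B + T * F0"
  have B0: "B \<ge> 0" using lB[of 0] T by (smt (verit) atLeastAtMost_iff norm_ge_zero)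
  have F00: "F0 \<ge> 0" using F0 by (smt (verit) norm_ge_zero)
  have AX0: "AX \<ge> 0" unfolding AX_def using B0 F00 G T by (smt (verit) mult_nonneg_nonneg norm_ge_zero)
  have arec: "norm (a k) \<le> AX + (K * dt) * (\<Sum>i<k. norm (a i))" if k: "k \<le> n" for k
  proof -
    have "norm (a k) \<le> norm x0 + norm (gm *\<^sub>R l (real k * dt)) + norm (\<Sum>i<k. dt *\<^sub>R fm (a i))"
      using closed[OF k] by (simp add: norm_triangle_le norm_triangle_ineq)
    also have "norm (gm *\<^sub>R l (real k * dt)) \<le> G * B"
      using lB[of "real k * dt"] tk[of k] k G B0 by (auto intro!: mult_mono)
    also have "norm (\<Sum>i<k. dt *\<^sub>R fm (a i)) \<le> (\<Sum>i<k. dt * (F0 + K * norm (a i)))"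
    proof (rule order_trans[OF norm_sum sum_mono])
      fix i
      have "norm (fm (a i)) \<le> norm (fm 0) + norm (fm (a i) - fm 0)" by (rule norm_triangle_sub)
      also have "\<dots> \<le> F0 + K * norm (a i)" using F0 fmlip[of "a i" 0] by simp
      finally show "norm (dt *\<^sub>R fm (a i)) \<le> dt * (F0 + K * norm (a i))"
        using dtp by (simp add: mult_left_mono)
    qed
    also have "(\<Sum>i<k. dt * (F0 + K * norm (a i))) = real k * dt * F0 + (K * dt) * (\<Sum>i<k. norm (a i))"
      by (simp add: sum.distrib sum_distrib_left algebra_simps)
    also have "real k * dt * F0 \<le> T * F0" using tk[of k] k F00 by (intro mult_right_mono) auto
    finally show ?thesis unfolding AX_def by simp
  qed
  have abd: "norm (a k) \<le> AX * exp (K * T)" if k: "k \<le> n" for k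
  proof -
    have "norm (a k) \<le> AX * (1 + K * dt)^k"
      by (rule dgron[of AX "K * dt" n "\<lambda>k. norm (a k)", OF AX0 _ arec k]) (use K dtp in auto)
    also have "(1 + K * dt)^k \<le> exp (K * dt * real k)" using K dtp by (intro pow_le_exp) auto
    also have "exp (K * dt * real k) \<le> exp (K * T)"
      using tk[of k] k K by (simp add: mult.assoc mult.commute[of dt])
    finally show ?thesis using AX0 by (simp add: mult_left_mono)
  qed
  show ?thesis using step closed abd unfolding a_def AX_def by blast
qed



lemma core_Y:
  fixes l Y :: "real \<Rightarrow> real^'n" and f :: "real^'n \<Rightarrow> real^'n" and x0 :: "real^'n"
  assumes T: "T > 0"
    and lB: "\<And>t. t \<in> {0..T} \<Longrightarrow> norm (l t) \<le> B"
    and C: "C > 0" and flip: "\<And>x y. norm (f x - f y) \<le> C * norm (x - y)"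
    and Yeq: "\<And>t. t \<in> {0..T} \<Longrightarrow> ((\<lambda>s. f (Y s)) has_integral (Y t - x0 - g0 *\<^sub>R l t)) {0..t}"
  shows "\<forall>t\<in>{0..T}. norm (f (Y t)) \<le> 2 * (norm (f 0) + C * (norm x0 + \<bar>g0\<bar> * B)) * exp (2 * C * T)"
proof -
  define I where "I = (\<lambda>t. Y t - x0 - g0 *\<^sub>R l t)"
  have B0: "B \<ge> 0" using lB[of 0] T by (smt (verit) atLeastAtMost_iff norm_ge_zero)
  have int: "(\<lambda>s. f (Y s)) integrable_on {0..T}" using Yeq[of T] T by (auto simp: integrable_on_def)
  have Ieq: "I t = integral {0..t} (\<lambda>s. f (Y s))" if "t \<in> {0..T}" for t
    using Yeq[OF that] unfolding I_def by (simp add: integral_unique)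
  have cont: "continuous_on {0..T} (\<lambda>t. integral {0..t} (\<lambda>s. f (Y s)))"
    by (rule indefinite_integral_continuous_1[OF int])
  have "bounded ((\<lambda>t. integral {0..t} (\<lambda>s. f (Y s))) ` {0..T})"
    by (rule compact_imp_bounded[OF compact_continuous_image[OF cont compact_Icc]])
  then obtain MI where MI0: "\<forall>x\<in>(\<lambda>t. integral {0..t} (\<lambda>s. f (Y s))) ` {0..T}. norm x \<le> MI"
    unfolding bounded_iff by blast
  have MI: "\<And>t. t \<in> {0..T} \<Longrightarrow> norm (integral {0..t} (\<lambda>s. f (Y s))) \<le> MI"
    using MI0 by blast
  have Ybd: "norm (Y t) \<le> norm x0 + \<bar>g0\<bar> * B + norm (I t)" if t: "t \<in> {0..T}" for t
  proof -
    have "Y t = x0 + g0 *\<^sub>R l t + I t" unfolding I_def by simp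
    moreover have "norm (x0 + g0 *\<^sub>R l t + I t) \<le> norm (x0 + g0 *\<^sub>R l t) + norm (I t)"
      by (rule norm_triangle_ineq)
    moreover have "norm (x0 + g0 *\<^sub>R l t) \<le> norm x0 + norm (g0 *\<^sub>R l t)"
      by (rule norm_triangle_ineq)
    ultimately have "norm (Y t) \<le> norm x0 + norm (g0 *\<^sub>R l t) + norm (I t)" by simp
    moreover have "norm (g0 *\<^sub>R l t) \<le> \<bar>g0\<bar> * B" using lB[OF t] by (simp add: mult_left_mono)
    ultimately show ?thesis by linarith
  qed
  have fbd: "norm (f (Y t)) \<le> norm (f 0) + C * norm (Y t)" for t
  proof -
    have "norm (f (Y t)) \<le> norm (f 0) + norm (f (Y t) - f 0)" by (rule norm_triangle_sub)
    thus ?thesis using flip[of "Y t" 0] by simp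
  qed
  define Mb where "Mb = norm (f 0) + C * (norm x0 + \<bar>g0\<bar> * B + MI)"
  have psi_bd: "norm (f (Y t)) \<le> Mb" if t: "t \<in> {0..T}" for t
  proof -
    have "norm (Y t) \<le> norm x0 + \<bar>g0\<bar> * B + MI" using Ybd[OF t] MI[OF t] Ieq[OF t] by simp
    hence "C * norm (Y t) \<le> C * (norm x0 + \<bar>g0\<bar> * B + MI)" using C by (simp add: mult_left_mono)
    thus ?thesis using fbd[of t] unfolding Mb_def by linarith
  qed
  have meas: "(\<lambda>s. f (Y s)) \<in> borel_measurable (lebesgue_on {0..T})"
    by (rule integrable_imp_measurable[OF int])
  have "(\<lambda>s. f (Y s)) absolutely_integrable_on {0..T}"
    by (rule measurable_bounded_by_integrable_imp_absolutely_integrable[OF meas _ _ psi_bd])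
       (auto intro: integrable_const_ivl)
  hence psi_int: "(\<lambda>s. norm (f (Y s))) integrable_on {0..T}" unfolding absolutely_integrable_on_def by simp
  have H: "norm (f (Y t)) \<le> (norm (f 0) + C * (norm x0 + \<bar>g0\<bar> * B)) + C * integral {0..t} (\<lambda>s. norm (f (Y s)))"
    if t: "t \<in> {0..T}" for t
  proof -
    have sub: "{0..t} \<subseteq> {0..T}" using t by auto
    have "norm (I t) \<le> integral {0..t} (\<lambda>s. norm (f (Y s)))"
      unfolding Ieq[OF t]
      by (rule integral_norm_bound_integral) (use int psi_int sub in \<open>auto intro: integrable_subinterval_real\<close>)
    hence "norm (Y t) \<le> (norm x0 + \<bar>g0\<bar> * B) + integral {0..t} (\<lambda>s. norm (f (Y s)))"
      using Ybd[OF t] by linarith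
    hence "C * norm (Y t) \<le> C * ((norm x0 + \<bar>g0\<bar> * B) + integral {0..t} (\<lambda>s. norm (f (Y s))))"
      using C by (simp add: mult_left_mono)
    hence "C * norm (Y t) \<le> C * (norm x0 + \<bar>g0\<bar> * B) + C * integral {0..t} (\<lambda>s. norm (f (Y s)))"
      by (simp add: distrib_left)
    thus ?thesis using fbd[of t] by linarith
  qed
  have A0: "norm (f 0) + C * (norm x0 + \<bar>g0\<bar> * B) \<ge> 0" using C B0 by simp
  have "norm (f (Y t)) \<le> 2 * (norm (f 0) + C * (norm x0 + \<bar>g0\<bar> * B)) * exp (2 * C * T)"
    if t: "t \<in> {0..T}" for t
    by (rule cgron[OF C A0 _ psi_int _ psi_bd H t]) (use T in auto)
  thus ?thesis by blast
qed



lemma tri3: fixes a b c :: "'b::real_normed_vector"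
  shows "norm (a + b + c) \<le> norm a + norm b + norm c"
  using norm_triangle_ineq[of "a+b" c] norm_triangle_ineq[of a b] by linarith

lemma tri4: fixes a b c d :: "'b::real_normed_vector"
  shows "norm (a + b + c + d) \<le> norm a + norm b + norm c + norm d"
  using norm_triangle_ineq[of "a+b+c" d] tri3[of a b c] by linarith

lemma cell_exists:
  assumes dt: "dt > 0" and t: "0 \<le> t"
  shows "\<exists>j. real j * dt \<le> t \<and> t < real (Suc j) * dt"
proof -
  define j where "j = nat \<lfloor>t / dt\<rfloor>"
  have "real j = of_int \<lfloor>t / dt\<rfloor>" using t dt unfolding j_def by simp
  hence "real j \<le> t / dt" "t / dt < real j + 1" by linarith+
  hence "real j * dt \<le> t" "t < real (Suc j) * dt" using dt by (auto simp: field_simps)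
  thus ?thesis by blast
qed

lemma core:
  fixes l Y X :: "real \<Rightarrow> real^'n" and f fm :: "real^'n \<Rightarrow> real^'n" and x0 :: "real^'n"
  assumes T: "T > 0" and n: "n \<ge> 1" and dt: "dt = T / real n"
    and lB: "\<And>t. t \<in> {0..T} \<Longrightarrow> norm (l t) \<le> B"
    and C: "C > 0" and flip: "\<And>x y. norm (f x - f y) \<le> C * norm (x - y)"
    and K: "K > 0" and fmlip: "\<And>x y. norm (fm x - fm y) \<le> K * norm (x - y)"
    and F0: "norm (fm 0) \<le> F0" and G: "\<bar>gm\<bar> \<le> G"
    and Yeq: "\<And>t. t \<in> {0..T} \<Longrightarrow> ((\<lambda>s. f (Y s)) has_integral (Y t - x0 - g0 *\<^sub>R l t)) {0..t}"
    and Xeq: "\<And>t. t \<in> {0..T} \<Longrightarrow> ((\<lambda>s. fm (X (dt * of_int \<lfloor>s / dt\<rfloor>))) has_integral (X t - x0 - gm *\<^sub>R l t)) {0..t}"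
    and ef: "\<And>x. norm x \<le> (norm x0 + G * B + T * F0) * exp (K * T) \<Longrightarrow> norm (f x - fm x) \<le> ef"
    and osc: "\<And>j s. j < n \<Longrightarrow> real j * dt \<le> s \<Longrightarrow> s < real (Suc j) * dt \<Longrightarrow> norm (l s - l (real j * dt)) \<le> Os j"
    and Osum: "(\<Sum>j<n. dt * Os j) \<le> \<eta>"
    and Mf_def: "Mf = 2 * (norm (f 0) + C * (norm x0 + \<bar>g0\<bar> * B)) * exp (2 * C * T)"
    and RX_def: "RX = (norm x0 + G * B + T * F0) * exp (K * T)"
    and Ad_def: "Ad = \<bar>g0 - gm\<bar> * B + C * \<bar>g0\<bar> * \<eta> + T * (C * dt * Mf + ef)"
  shows "\<forall>t\<in>{0..T}. norm (Y t - X t) \<le> Ad * exp (C * T) + 2 * \<bar>g0 - gm\<bar> * B + dt * (Mf + F0 + K * RX)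
             \<and> norm (X t) \<le> RX + 2 * G * B + dt * (F0 + K * RX)"
proof -
  have dtp: "dt > 0" using T n dt by auto
  have ndt: "real n * dt = T" using n dt by auto
  have tk: "0 \<le> real k * dt" "k \<le> n \<Longrightarrow> real k * dt \<le> T" for k
    using dtp ndt by (auto intro: mult_right_mono simp flip: ndt)
  have tkS: "real (Suc k) * dt = real k * dt + dt" for k by (simp add: algebra_simps)
  define a where "a = (\<lambda>k. X (real k * dt))"
  note CX = core_X[OF T n dt lB K fmlip F0 G Xeq]
  have step: "X t = a j + gm *\<^sub>R (l t - l (real j * dt)) + (t - real j * dt) *\<^sub>R fm (a j)"
    if "j < n" "real j * dt \<le> t" "t \<le> real (Suc j) * dt" for j t
    using CX that unfolding a_def by blast
  have closed: "a k = x0 + gm *\<^sub>R l (real k * dt) + (\<Sum>i<k. dt *\<^sub>R fm (a i))" if "k \<le> n" for k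
    using CX that unfolding a_def by blast
  have abd: "norm (a k) \<le> RX" if "k \<le> n" for k
    using CX that unfolding a_def RX_def by blast
  have B0: "B \<ge> 0" using lB[of 0] T by (smt (verit) atLeastAtMost_iff norm_ge_zero)
  have F00: "F0 \<ge> 0" using F0 by (smt (verit) norm_ge_zero)
  have RX0: "RX \<ge> 0" unfolding RX_def using B0 F00 G T by (intro mult_nonneg_nonneg) (smt (verit) mult_nonneg_nonneg norm_ge_zero, simp)
  have ef0: "ef \<ge> 0" using ef[of 0] RX0 RX_def by (smt (verit) norm_ge_zero norm_zero)
  have Os0: "Os j \<ge> 0" if "j < n" for j using osc[OF that, of "real j * dt"] dtp tkS by (smt (verit) norm_ge_zero)
  have fma: "norm (fm (a j)) \<le> F0 + K * RX" if "j \<le> n" for j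
  proof -
    have "norm (fm (a j)) \<le> norm (fm 0) + norm (fm (a j) - fm 0)" by (rule norm_triangle_sub)
    also have "\<dots> \<le> F0 + K * norm (a j)" using F0 fmlip[of "a j" 0] by simp
    also have "K * norm (a j) \<le> K * RX" using abd[OF that] K by simp
    finally show ?thesis by simp
  qed
  have psi: "norm (f (Y t)) \<le> Mf" if "t \<in> {0..T}" for t
    using core_Y[OF T lB C flip Yeq] that unfolding Mf_def by blast
  have Mf0: "Mf \<ge> 0" using psi[of 0] T by (smt (verit) atLeastAtMost_iff norm_ge_zero)
  define I where "I = (\<lambda>t. Y t - x0 - g0 *\<^sub>R l t)"
  have Yseg: "((\<lambda>s. f (Y s)) has_integral (I b - I a')) {a'..b}" if "0 \<le> a'" "a' \<le> b" "b \<le> T" for a' b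
    unfolding I_def by (rule seg_int[where T=T, OF Yeq that])
  have Iinc: "norm (I b - I a') \<le> Mf * (b - a')" if ab: "0 \<le> a'" "a' \<le> b" "b \<le> T" for a' b
  proof -
    have "norm (I b - I a') \<le> Mf * Henstock_Kurzweil_Integration.content (cbox a' b)"
      by (rule has_integral_bound[OF Mf0]) (use Yseg[OF ab] psi ab in auto)
    thus ?thesis using ab by simp
  qed
  have I0: "I 0 = 0"
  proof -
    have "((\<lambda>s. f (Y s)) has_integral I 0) {0}" using Yeq[of 0] T unfolding I_def by auto
    thus ?thesis using has_integral_refl(2) by (rule has_integral_unique)
  qed
  have Yrep: "Y t = x0 + g0 *\<^sub>R l t + I t" for t unfolding I_def by simp
  have Ycell: "norm (Y s - Y (real j * dt)) \<le> \<bar>g0\<bar> * Os j + dt * Mf"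
    if j: "j < n" and s: "real j * dt \<le> s" "s < real (Suc j) * dt" for j s
  proof -
    have sT: "s \<le> T" using s tk(2)[of "Suc j"] j by auto
    have "Y s - Y (real j * dt) = g0 *\<^sub>R (l s - l (real j * dt)) + (I s - I (real j * dt))"
      unfolding Yrep by (simp add: algebra_simps)
    hence "norm (Y s - Y (real j * dt)) \<le> norm (g0 *\<^sub>R (l s - l (real j * dt))) + norm (I s - I (real j * dt))"
      by (metis norm_triangle_ineq)
    also have "norm (g0 *\<^sub>R (l s - l (real j * dt))) \<le> \<bar>g0\<bar> * Os j"
      using osc[OF j s] by (simp add: mult_left_mono)
    also have "norm (I s - I (real j * dt)) \<le> Mf * (s - real j * dt)"
      using Iinc[of "real j * dt" s] tk s sT by auto
    also have "Mf * (s - real j * dt) \<le> Mf * dt" using Mf0 s tkS[of j] by (intro mult_left_mono) auto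
    finally show ?thesis by (simp add: mult.commute)
  qed
  define d where "d = (\<lambda>k. Y (real k * dt) - a k)"
  define Dv where "Dv = (\<lambda>j. (I (real (Suc j) * dt) - I (real j * dt)) - dt *\<^sub>R fm (a j))"
  have Dbd: "norm (Dv j) \<le> dt * (C * (\<bar>g0\<bar> * Os j + dt * Mf) + C * norm (d j) + ef)" if j: "j < n" for j
  proof -
    have sT: "real (Suc j) * dt \<le> T" using tk(2)[of "Suc j"] j by auto
    have hi: "((\<lambda>s. f (Y s) - fm (a j)) has_integral Dv j) (cbox (real j * dt) (real (Suc j) * dt))"
    proof -
      have "((\<lambda>s. f (Y s) - fm (a j)) has_integral
         ((I (real (Suc j) * dt) - I (real j * dt)) - Henstock_Kurzweil_Integration.content {real j * dt..real (Suc j) * dt} *\<^sub>R fm (a j))) {real j * dt..real (Suc j) * dt}"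
        by (intro has_integral_diff Yseg has_integral_const_real) (use tk sT dtp in \<open>auto simp: tkS\<close>)
      moreover have "Henstock_Kurzweil_Integration.content {real j * dt..real (Suc j) * dt} = dt" using dtp by (simp add: algebra_simps)
      ultimately show ?thesis unfolding Dv_def by simp
    qed
    have "norm (Dv j) \<le> (C * (\<bar>g0\<bar> * Os j + dt * Mf) + C * norm (d j) + ef) * Henstock_Kurzweil_Integration.content (cbox (real j * dt) (real (Suc j) * dt))"
    proof (rule has_integral_bound_spike_finite[OF _ _ hi])
      show "0 \<le> C * (\<bar>g0\<bar> * Os j + dt * Mf) + C * norm (d j) + ef"
        using C Os0[OF j] Mf0 dtp ef0 by simp
      show "finite {real (Suc j) * dt}" by simp
      fix s assume "s \<in> cbox (real j * dt) (real (Suc j) * dt) - {real (Suc j) * dt}"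
      hence s: "real j * dt \<le> s" "s < real (Suc j) * dt" by auto
      have "f (Y s) - fm (a j) = (f (Y s) - f (Y (real j * dt))) + (f (Y (real j * dt)) - f (a j)) + (f (a j) - fm (a j))"
        by simp
      hence "norm (f (Y s) - fm (a j)) \<le> norm (f (Y s) - f (Y (real j * dt))) + norm (f (Y (real j * dt)) - f (a j)) + norm (f (a j) - fm (a j))"
        by (metis tri3)
      also have "norm (f (Y s) - f (Y (real j * dt))) \<le> C * (\<bar>g0\<bar> * Os j + dt * Mf)"
        using flip[of "Y s" "Y (real j * dt)"] Ycell[OF j s] C by (smt (verit) mult_left_mono)
      also have "norm (f (Y (real j * dt)) - f (a j)) \<le> C * norm (d j)"
        using flip unfolding d_def by simp
      also have "norm (f (a j) - fm (a j)) \<le> ef" using ef abd[of j] j RX_def by simp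
      finally show "norm (f (Y s) - fm (a j)) \<le> C * (\<bar>g0\<bar> * Os j + dt * Mf) + C * norm (d j) + ef" by simp
    qed
    also have "Henstock_Kurzweil_Integration.content (cbox (real j * dt) (real (Suc j) * dt)) = dt" using dtp by (simp add: algebra_simps)
    finally show ?thesis by (simp add: mult.commute)
  qed
  have dclosed: "d k = (g0 - gm) *\<^sub>R l (real k * dt) + (\<Sum>j<k. Dv j)" if k: "k \<le> n" for k
  proof -
    have tel: "(\<Sum>j<k. I (real (Suc j) * dt) - I (real j * dt)) = I (real k * dt)"
    proof -
      have "(\<Sum>j<k. I (real (Suc j) * dt) - I (real j * dt)) = I (real k * dt) - I (real 0 * dt)"
        by (rule sum_lessThan_telescope[of "\<lambda>j. I (real j * dt)"])
      thus ?thesis using I0 by (metis diff_zero mult_zero_left of_nat_0)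
    qed
    have "(\<Sum>j<k. Dv j) = (\<Sum>j<k. I (real (Suc j) * dt) - I (real j * dt)) - (\<Sum>i<k. dt *\<^sub>R fm (a i))"
      unfolding Dv_def by (rule sum_subtractf)
    hence "(\<Sum>j<k. Dv j) = I (real k * dt) - (\<Sum>i<k. dt *\<^sub>R fm (a i))"
      unfolding tel .
    thus ?thesis unfolding d_def using closed[OF k] Yrep[of "real k * dt"] by (simp add: algebra_simps)
  qed
  define Ad' where "Ad' = Ad"
  have Ad0: "Ad \<ge> 0" unfolding Ad_def
  proof -
    have "\<eta> \<ge> 0" using Osum Os0 dtp by (smt (verit) lessThan_iff mult_nonneg_nonneg sum_nonneg)
    thus "0 \<le> \<bar>g0 - gm\<bar> * B + C * \<bar>g0\<bar> * \<eta> + T * (C * dt * Mf + ef)"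
      using B0 C T dtp Mf0 ef0 by simp
  qed
  have drec: "norm (d k) \<le> Ad + (C * dt) * (\<Sum>j<k. norm (d j))" if k: "k \<le> n" for k
  proof -
    have "norm (d k) \<le> norm ((g0 - gm) *\<^sub>R l (real k * dt)) + norm (\<Sum>j<k. Dv j)"
      unfolding dclosed[OF k] by (rule norm_triangle_ineq)
    also have "norm ((g0 - gm) *\<^sub>R l (real k * dt)) \<le> \<bar>g0 - gm\<bar> * B"
      using lB[of "real k * dt"] tk[of k] k by (simp add: mult_left_mono)
    also have "norm (\<Sum>j<k. Dv j) \<le> (\<Sum>j<k. dt * (C * (\<bar>g0\<bar> * Os j + dt * Mf) + C * norm (d j) + ef))"
      using Dbd k by (intro order_trans[OF norm_sum sum_mono]) auto
    also have "(\<Sum>j<k. dt * (C * (\<bar>g0\<bar> * Os j + dt * Mf) + C * norm (d j) + ef))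
        = C * \<bar>g0\<bar> * (\<Sum>j<k. dt * Os j) + real k * dt * (C * dt * Mf + ef) + (C * dt) * (\<Sum>j<k. norm (d j))"
      by (simp add: sum.distrib sum_distrib_left algebra_simps)
    finally have 1: "norm (d k) \<le> \<bar>g0 - gm\<bar> * B + (C * \<bar>g0\<bar> * (\<Sum>j<k. dt * Os j) + real k * dt * (C * dt * Mf + ef) + (C * dt) * (\<Sum>j<k. norm (d j)))" by simp
    have "(\<Sum>j<k. dt * Os j) \<le> \<eta>"
    proof -
      have "(\<Sum>j<k. dt * Os j) \<le> (\<Sum>j<n. dt * Os j)"
        using k Os0 dtp by (intro sum_mono2) auto
      thus ?thesis using Osum by simp
    qed
    hence 2: "C * \<bar>g0\<bar> * (\<Sum>j<k. dt * Os j) \<le> C * \<bar>g0\<bar> * \<eta>" using C by (intro mult_left_mono) auto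
    have 3: "real k * dt * (C * dt * Mf + ef) \<le> T * (C * dt * Mf + ef)"
      using tk[of k] k C dtp Mf0 ef0 by (intro mult_right_mono) auto
    show ?thesis unfolding Ad_def using 1 2 3 by linarith
  qed
  have dbd: "norm (d k) \<le> Ad * exp (C * T)" if k: "k \<le> n" for k
  proof -
    have "norm (d k) \<le> Ad * (1 + C * dt)^k"
      by (rule dgron[of Ad "C * dt" n "\<lambda>k. norm (d k)", OF Ad0 _ drec k]) (use C dtp in auto)
    also have "(1 + C * dt)^k \<le> exp (C * dt * real k)" using C dtp by (intro pow_le_exp) auto
    also have "exp (C * dt * real k) \<le> exp (C * T)"
      using tk[of k] k C by (simp add: mult.assoc mult.commute[of dt])
    finally show ?thesis using Ad0 by (simp add: mult_left_mono)
  qed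
  have extra0: "0 \<le> 2 * \<bar>g0 - gm\<bar> * B + dt * (Mf + F0 + K * RX)"
    using B0 dtp Mf0 F00 K RX0 by simp
  show ?thesis
  proof
    fix t assume t: "t \<in> {0..T}"
    show "norm (Y t - X t) \<le> Ad * exp (C * T) + 2 * \<bar>g0 - gm\<bar> * B + dt * (Mf + F0 + K * RX)
             \<and> norm (X t) \<le> RX + 2 * G * B + dt * (F0 + K * RX)"
    proof (cases "t = T")
      case True
      have "Y t - X t = d n" unfolding d_def a_def True ndt by simp
      hence 1: "norm (Y t - X t) \<le> Ad * exp (C * T)" using dbd[of n] by simp
      have "X t = a n" unfolding a_def True ndt by simp
      hence "norm (X t) \<le> RX" using abd[of n] by simp
      thus ?thesis using 1 extra0 B0 G dtp F00 K RX0
        by (smt (verit) mult_nonneg_nonneg)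
    next
      case False
      hence tT: "t < T" using t by auto
      obtain j where j: "real j * dt \<le> t" "t < real (Suc j) * dt" using cell_exists[OF dtp, of t] t by auto
      have jn: "j < n"
      proof (rule ccontr)
        assume "\<not> j < n" hence "real n \<le> real j" by simp
        hence "real n * dt \<le> real j * dt" using dtp by (intro mult_right_mono) auto
        thus False using j tT ndt by simp
      qed
      have Xt: "X t = a j + gm *\<^sub>R (l t - l (real j * dt)) + (t - real j * dt) *\<^sub>R fm (a j)"
        using step[OF jn j(1)] j(2) by simp
      have ltj: "norm (l t - l (real j * dt)) \<le> 2 * B"
        using lB[of t] lB[of "real j * dt"] t tk[of j] jn norm_triangle_ineq4[of "l t" "l (real j * dt)"] by auto
      have tdt: "t - real j * dt \<le> dt" "0 \<le> t - real j * dt" using j tkS[of j] by auto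
      have "Y t - X t = d j + (g0 - gm) *\<^sub>R (l t - l (real j * dt)) + (I t - I (real j * dt)) + (- ((t - real j * dt) *\<^sub>R fm (a j)))"
        unfolding Xt d_def Yrep[of t] Yrep[of "real j * dt"] a_def by (simp add: algebra_simps)
      hence "norm (Y t - X t) \<le> norm (d j) + norm ((g0 - gm) *\<^sub>R (l t - l (real j * dt))) + norm (I t - I (real j * dt)) + norm ((t - real j * dt) *\<^sub>R fm (a j))"
        by (metis tri4 norm_minus_cancel)
      also have "norm (d j) \<le> Ad * exp (C * T)" using dbd jn by simp
      also have "norm ((g0 - gm) *\<^sub>R (l t - l (real j * dt))) \<le> \<bar>g0 - gm\<bar> * (2 * B)"
        using ltj by (simp add: mult_left_mono)
      also have "norm (I t - I (real j * dt)) \<le> Mf * (t - real j * dt)"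
        using Iinc[of "real j * dt" t] tk j t by auto
      also have "Mf * (t - real j * dt) \<le> Mf * dt" using tdt Mf0 by (intro mult_left_mono) auto
      also have "norm ((t - real j * dt) *\<^sub>R fm (a j)) \<le> dt * (F0 + K * RX)"
        using fma[of j] jn tdt by (simp add: mult_mono)
      finally have 1: "norm (Y t - X t) \<le> Ad * exp (C * T) + 2 * \<bar>g0 - gm\<bar> * B + dt * (Mf + F0 + K * RX)"
        by (simp add: algebra_simps)
      have "norm (X t) \<le> norm (a j) + norm (gm *\<^sub>R (l t - l (real j * dt))) + norm ((t - real j * dt) *\<^sub>R fm (a j))"
        unfolding Xt by (rule tri3)
      also have "norm (a j) \<le> RX" using abd jn by simp
      also have "norm (gm *\<^sub>R (l t - l (real j * dt))) \<le> G * (2 * B)"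
        using ltj G B0 by (simp add: mult_mono)
      also have "norm ((t - real j * dt) *\<^sub>R fm (a j)) \<le> dt * (F0 + K * RX)"
        using fma[of j] jn tdt by (simp add: mult_mono)
      finally show ?thesis using 1 by simp
    qed
  qed
qed



lemma lip_cont:
  fixes g :: "'a::real_normed_vector \<Rightarrow> 'b::real_normed_vector"
  assumes K: "K \<ge> 0" and H: "\<And>x y. norm (g x - g y) \<le> K * norm (x - y)"
  shows "continuous_on S g"
proof -
  have "K-lipschitz_on S g" using K H by (intro lipschitz_onI) (auto simp: dist_norm)
  thus ?thesis by (rule lipschitz_on_continuous_on)
qed

lemma unif_conv:
  fixes f :: "real^'n \<Rightarrow> real^'n" and fm :: "nat \<Rightarrow> real^'n \<Rightarrow> real^'n"
  assumes C: "C > 0" and flip: "\<And>x y. norm (f x - f y) \<le> C * norm (x - y)"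
    and K: "K > 0" and fmlip: "\<And>m x y. m \<ge> 1 \<Longrightarrow> norm (fm m x - fm m y) \<le> K * norm (x - y)"
    and L2: "(\<lambda>m. sqrt (LINT x:cball 0 (R+1)|lborel. (norm (fm m x - f x))\<^sup>2)) \<longlonglongrightarrow> 0"
    and e: "e > 0"
  shows "\<exists>m0\<ge>1. \<forall>m\<ge>m0. \<forall>x. norm x \<le> R \<longrightarrow> norm (f x - fm m x) \<le> e"
proof -
  define D where "D = cball (0::real^'n) (R+1)"
  define r where "r = min 1 (e / (2 * (K + C)))"
  have KC: "K + C > 0" using K C by simp
  have r1: "r > 0" "r \<le> 1" "r \<le> e / (2 * (K + C))" using e KC unfolding r_def by auto
  have "(K + C) * r \<le> (K + C) * (e / (2 * (K + C)))" using r1 KC by (intro mult_left_mono) auto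
  also have "\<dots> = e/2" using KC by (simp add: field_simps)
  finally have r: "r > 0" "r \<le> 1" "(K + C) * r \<le> e/2" using r1 by auto
  define vol where "vol = Henstock_Kurzweil_Integration.content (ball (0::real^'n) r)"
  have vol: "vol > 0" unfolding vol_def by (rule content_ball_pos[OF r(1)])
  have volx: "Henstock_Kurzweil_Integration.content (ball x r) = vol" for x :: "real^'n"
    unfolding vol_def using content_ball_conv_unit_ball[of r x] content_ball_conv_unit_ball[of r "0::real^'n"] r by simp
  define c where "c = (e/2)^2 * vol"
  have c: "c > 0" using e vol unfolding c_def by simp
  have sc: "sqrt c > 0" using c by simp
  have "\<exists>no. \<forall>m\<ge>no. norm (sqrt (LINT x:D|lborel. (norm (fm m x - f x))\<^sup>2) - 0) < sqrt c"
    using L2 sc unfolding D_def LIMSEQ_iff by blast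
  then obtain m1 where m1: "\<And>m. m \<ge> m1 \<Longrightarrow> norm (sqrt (LINT x:D|lborel. (norm (fm m x - f x))\<^sup>2) - 0) < sqrt c"
    by blast
  show ?thesis
  proof (intro exI[of _ "max m1 1"] conjI allI impI)
    fix m x assume m: "max m1 1 \<le> m" and x: "norm (x::real^'n) \<le> R"
    show "norm (f x - fm m x) \<le> e"
    proof (rule ccontr)
      assume "\<not> norm (f x - fm m x) \<le> e"
      hence big: "norm (fm m x - f x) > e" by (simp add: norm_minus_commute)
      have m1': "m \<ge> 1" "m \<ge> m1" using m by auto
      define h where "h = (\<lambda>y. (norm (fm m y - f y))\<^sup>2)"
      have hb: "(e/2)^2 \<le> h y" if y: "y \<in> ball x r" for y
      proof -
        have dy: "norm (x - y) < r" using y by (simp add: dist_norm)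
        have eq: "(fm m x - f x) - (fm m y - f y) = (fm m x - fm m y) - (f x - f y)" by (simp add: algebra_simps)
        have "norm ((fm m x - f x) - (fm m y - f y)) \<le> norm (fm m x - fm m y) + norm (f x - f y)"
          unfolding eq by (rule norm_triangle_ineq4)
        also have "\<dots> \<le> K * norm (x - y) + C * norm (x - y)" using fmlip[OF m1'(1)] flip by (intro add_mono) auto
        also have "\<dots> \<le> (K + C) * r" using dy K C by (simp add: distrib_right[symmetric] mult_left_mono)
        finally have "norm ((fm m x - f x) - (fm m y - f y)) \<le> e/2" using r by linarith
        hence "norm (fm m y - f y) \<ge> e/2"
          using big norm_triangle_ineq2[of "fm m x - f x" "fm m y - f y"] by linarith
        thus ?thesis unfolding h_def using e by (intro power_mono) auto
      qed
      have sub: "ball x r \<subseteq> D"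
      proof
        fix y assume "y \<in> ball x r"
        hence "norm (y - x) < r" by (simp add: dist_norm norm_minus_commute)
        moreover have "norm y \<le> norm x + norm (y - x)" by (rule norm_triangle_sub)
        ultimately have "norm y \<le> R + 1" using x r by linarith
        thus "y \<in> D" unfolding D_def by simp
      qed
      have c1: "continuous_on D (fm m)" by (rule lip_cont[OF _ fmlip[OF m1'(1)]]) (use K in simp)
      have c2: "continuous_on D f" by (rule lip_cont[OF _ flip]) (use C in simp)
      have cont: "continuous_on D h" unfolding h_def
        by (intro continuous_on_power continuous_on_norm continuous_on_diff c1 c2)
      have int1: "integrable lborel (\<lambda>y. indicator D y *\<^sub>R h y)"
        by (rule borel_integrable_compact[OF _ cont]) (simp add: D_def)
      have int2: "integrable lborel (\<lambda>y. indicator (ball x r) y * (e/2)^2)"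
        using emeasure_lborel_ball_finite[of x r] by (intro integrable_mult_left) (simp add: integrable_indicator_iff)
      have "c = integral\<^sup>L lborel (\<lambda>y. indicator (ball x r) y * (e/2)^2)"
        unfolding c_def by (simp add: volx)
      also have "\<dots> \<le> integral\<^sup>L lborel (\<lambda>y. indicator D y *\<^sub>R h y)"
      proof (rule integral_mono[OF int2 int1])
        fix y
        show "indicator (ball x r) y * (e/2)^2 \<le> indicator D y *\<^sub>R h y"
        proof (cases "y \<in> ball x r")
          case True
          hence "y \<in> D" using sub by auto
          thus ?thesis using True hb[OF True] by simp
        next
          case False
          have "0 \<le> h y" unfolding h_def by simp
          thus ?thesis using False by simp
        qed
      qed
      also have "\<dots> = (LINT x:D|lborel. (norm (fm m x - f x))\<^sup>2)"
        unfolding set_lebesgue_integral_def h_def by simp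
      finally have cle: "c \<le> (LINT x:D|lborel. (norm (fm m x - f x))\<^sup>2)" .
      have a: "\<bar>sqrt (LINT x:D|lborel. (norm (fm m x - f x))\<^sup>2)\<bar> < sqrt c"
        using m1[OF m1'(2)] by (simp only: real_norm_def diff_zero)
      have "sqrt (LINT x:D|lborel. (norm (fm m x - f x))\<^sup>2) < sqrt c"
        using a abs_ge_self[of "sqrt (LINT x:D|lborel. (norm (fm m x - f x))\<^sup>2)"] by linarith
      hence "(LINT x:D|lborel. (norm (fm m x - f x))\<^sup>2) < c" unfolding real_sqrt_less_iff .
      thus False using cle by linarith
    qed
  qed (simp)
qed



lemma cadlag_bounded:
  fixes l :: "real \<Rightarrow> 'b::real_normed_vector"
  assumes cad: "cadlag_on T l" and T: "T > 0"
  shows "\<exists>B. \<forall>t\<in>{0..T}. norm (l t) \<le> B"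
proof -
  obtain P where P: "finite P" "\<forall>s t. 0 \<le> s \<and> s \<le> t \<and> t < T \<and> (\<forall>p\<in>P. \<not>(s < p \<and> p \<le> t))
      \<longrightarrow> norm (l t - l s) \<le> 1"
    using cadlag_partition[OF cad T, of 1] unfolding goodp_def by auto
  define Bs where "Bs = Max ((\<lambda>p. norm (l p)) ` (insert 0 (insert T P)))"
  have Bs: "norm (l p) \<le> Bs" if "p \<in> insert 0 (insert T P)" for p
    unfolding Bs_def using P(1) that by (intro Max_ge) auto
  have "norm (l t) \<le> Bs + 1" if t: "t \<in> {0..T}" for t
  proof (cases "t = T")
    case True thus ?thesis using Bs[of T] by simp
  next
    case False
    hence tT: "t < T" using t by auto
    define Q where "Q = {p \<in> insert 0 P. 0 \<le> p \<and> p \<le> t}"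
    have Qf: "finite Q" "Q \<noteq> {}" using P(1) t unfolding Q_def by auto
    define ps where "ps = Max Q"
    have psQ: "ps \<in> Q" unfolding ps_def using Qf by (rule Max_in)
    have psmax: "p \<le> ps" if "p \<in> Q" for p unfolding ps_def using Qf that by (intro Max_ge) auto
    have nop: "\<forall>p\<in>P. \<not>(ps < p \<and> p \<le> t)"
    proof (intro ballI notI)
      fix p assume p: "p \<in> P" "ps < p \<and> p \<le> t"
      have "0 \<le> ps" using psQ Q_def by auto
      hence "p \<in> Q" using p unfolding Q_def by auto
      thus False using psmax p by force
    qed
    have "norm (l t - l ps) \<le> 1" using P(2) psQ tT nop unfolding Q_def by auto
    moreover have "norm (l ps) \<le> Bs" using psQ Bs unfolding Q_def by auto
    ultimately show ?thesis using norm_triangle_sub[of "l t" "l ps"] by linarith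
  qed
  thus ?thesis by blast
qed

lemma rc_rat_bound:
  fixes l :: "real \<Rightarrow> 'b::real_normed_vector"
  assumes rc: "(l \<longlongrightarrow> l s) (at_right s)" and sb: "s < b"
    and H: "\<And>q. q \<in> \<rat> \<Longrightarrow> s < q \<Longrightarrow> q < b \<Longrightarrow> norm (l q - c) \<le> M"
  shows "norm (l s - c) \<le> M"
proof (rule field_le_epsilon)
  fix e :: real assume e: "e > 0"
  obtain b' where b': "b' > s" "\<forall>y. s \<le> y \<and> y < b' \<longrightarrow> norm (l y - l s) < e"
    using rc_nbhd[OF rc e] by auto
  obtain q where q: "q \<in> \<rat>" "s < q" "q < min b b'" using Rats_dense_in_real[of s "min b b'"] sb b' by auto
  have "norm (l q - c) \<le> M" using H q by auto
  moreover have "norm (l q - l s) < e" using b' q by auto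
  moreover have "norm (l s - c) \<le> norm (l q - c) + norm (l q - l s)"
  proof -
    have "l s - c = (l q - c) - (l q - l s)" by simp
    thus ?thesis using norm_triangle_ineq4[of "l q - c" "l q - l s"] by simp
  qed
  ultimately show "norm (l s - c) \<le> M + e" by linarith
qed



lemma osc_small:
  fixes l :: "real \<Rightarrow> 'b::real_normed_vector"
  assumes cad: "cadlag_on T l" and T: "T > 0" and eta: "\<eta> > 0"
  shows "\<exists>N\<ge>1. \<forall>n\<ge>N. (\<Sum>j<n. ennreal (T / real n) * (SUP q\<in>{q\<in>\<rat>. real j * (T / real n) \<le> q \<and> q < real (Suc j) * (T / real n)}.
             ennreal (norm (l q - l (real j * (T / real n)))))) \<le> ennreal \<eta>"
proof -
  obtain B where B': "\<forall>t\<in>{0..T}. norm (l t) \<le> B" using cadlag_bounded[OF cad T] by blast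
  have B: "\<And>t. t \<in> {0..T} \<Longrightarrow> norm (l t) \<le> B" using B' by blast
  have B0: "B \<ge> 0" using B[of 0] T by (smt (verit) atLeastAtMost_iff norm_ge_zero)
  define \<epsilon> where "\<epsilon> = \<eta> / (2 * T)"
  have ep: "\<epsilon> > 0" "real n * (T / real n) * \<epsilon> \<le> \<eta> / 2" if "n \<ge> 1" for n
    using eta T that unfolding \<epsilon>_def by (auto simp: field_simps)
  obtain P where P: "finite P" "\<forall>s t. 0 \<le> s \<and> s \<le> t \<and> t < T \<and> (\<forall>p\<in>P. \<not>(s < p \<and> p \<le> t))
      \<longrightarrow> norm (l t - l s) \<le> \<epsilon>"
    using cadlag_partition[OF cad T ep(1)[of 1]] unfolding goodp_def by auto
  define N where "N = max 1 (nat \<lceil>4 * B * real (card P) * T / \<eta>\<rceil>)"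
  show ?thesis
  proof (intro exI[of _ N] conjI allI impI)
    show "1 \<le> N" unfolding N_def by simp
    fix n assume nN: "N \<le> n"
    hence n1: "n \<ge> 1" unfolding N_def by simp
    define dt where "dt = T / real n"
    have dtp: "dt > 0" unfolding dt_def using T n1 by simp
    have ndt: "real n * dt = T" unfolding dt_def using n1 by simp
    have nbig: "4 * B * real (card P) * T / \<eta> \<le> real n"
      using nN unfolding N_def by (smt (verit) le_max_iff_disj nat_ceiling_le_eq of_nat_le_iff real_nat_ceiling_ge)
    have term2: "dt * (2 * B) * real (card P) \<le> \<eta> / 2"
    proof -
      have "4 * B * real (card P) * T \<le> real n * \<eta>" using nbig eta by (simp add: field_simps)
      thus ?thesis unfolding dt_def using n1 eta by (simp add: field_simps)
    qed
    define bad where "bad = {j. j < n \<and> (\<exists>p\<in>P. real j * dt < p \<and> p < real (Suc j) * dt)}"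
    define c where "c = (\<lambda>j. if j \<in> bad then 2 * B else \<epsilon>)"
    have c0: "c j \<ge> 0" for j unfolding c_def using B0 ep(1)[OF n1] by auto
    have cardbad: "card bad \<le> card P"
    proof -
      have "bad \<subseteq> (\<lambda>p. nat \<lfloor>p / dt\<rfloor>) ` P"
      proof
        fix j assume "j \<in> bad"
        then obtain p where p: "p \<in> P" "real j * dt < p" "p < real (Suc j) * dt" unfolding bad_def by auto
        have "real j \<le> p / dt" "p / dt < real j + 1" using p dtp by (auto simp: field_simps)
        hence "\<lfloor>p / dt\<rfloor> = int j" by (intro floor_unique) auto
        thus "j \<in> (\<lambda>p. nat \<lfloor>p / dt\<rfloor>) ` P" using p(1) by force
      qed
      hence "card bad \<le> card ((\<lambda>p. nat \<lfloor>p / dt\<rfloor>) ` P)" using P(1) by (intro card_mono) auto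
      also have "\<dots> \<le> card P" using P(1) by (rule card_image_le)
      finally show ?thesis .
    qed
    have sup_le: "(SUP q\<in>{q\<in>\<rat>. real j * dt \<le> q \<and> q < real (Suc j) * dt}. ennreal (norm (l q - l (real j * dt)))) \<le> ennreal (c j)"
      if j: "j < n" for j
    proof (rule SUP_least)
      fix q assume "q \<in> {q\<in>\<rat>. real j * dt \<le> q \<and> q < real (Suc j) * dt}"
      hence q: "real j * dt \<le> q" "q < real (Suc j) * dt" by auto
      have "real (Suc j) * dt \<le> real n * dt" using j dtp by (intro mult_right_mono) auto
      hence qT: "q < T" using q ndt by linarith
      have j0: "0 \<le> real j * dt" using dtp by simp
      have "norm (l q - l (real j * dt)) \<le> c j"
      proof (cases "j \<in> bad")
        case True
        have "norm (l q - l (real j * dt)) \<le> norm (l q) + norm (l (real j * dt))" by (rule norm_triangle_ineq4)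
        also have "\<dots> \<le> B + B" using B[of q] B[of "real j * dt"] q qT j0 by (intro add_mono) auto
        finally show ?thesis using True unfolding c_def by simp
      next
        case False
        have "\<forall>p\<in>P. \<not>(real j * dt < p \<and> p \<le> q)" using False q j unfolding bad_def by force
        hence "norm (l q - l (real j * dt)) \<le> \<epsilon>" using P(2) q qT j0 by auto
        thus ?thesis using False unfolding c_def by simp
      qed
      thus "ennreal (norm (l q - l (real j * dt))) \<le> ennreal (c j)" by (rule ennreal_leI)
    qed
    have "(\<Sum>j<n. ennreal dt * (SUP q\<in>{q\<in>\<rat>. real j * dt \<le> q \<and> q < real (Suc j) * dt}. ennreal (norm (l q - l (real j * dt)))))
        \<le> (\<Sum>j<n. ennreal dt * ennreal (c j))"
      using sup_le by (intro sum_mono mult_left_mono) auto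
    also have "\<dots> = (\<Sum>j<n. ennreal (dt * c j))"
      using c0 dtp by (simp add: ennreal_mult)
    also have "\<dots> = ennreal (\<Sum>j<n. dt * c j)"
      using c0 dtp by (intro sum_ennreal) auto
    also have "(\<Sum>j<n. dt * c j) \<le> \<eta>"
    proof -
      have "(\<Sum>j<n. dt * c j) \<le> (\<Sum>j<n. dt * \<epsilon> + (if j \<in> bad then dt * (2 * B) else 0))"
        unfolding c_def using dtp B0 ep(1)[OF n1] by (intro sum_mono) (auto simp: mult_left_mono)
      also have "\<dots> = real n * dt * \<epsilon> + dt * (2 * B) * real (card bad)"
      proof -
        have "bad \<subseteq> {..<n}" unfolding bad_def by auto
        hence "(\<Sum>j<n. (if j \<in> bad then dt * (2 * B) else 0)) = (\<Sum>j\<in>bad. dt * (2 * B))"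
          by (simp add: sum.If_cases Int_absorb1)
        thus ?thesis by (simp add: sum.distrib)
      qed
      also have "dt * (2 * B) * real (card bad) \<le> dt * (2 * B) * real (card P)"
        using cardbad dtp B0 by (intro mult_left_mono) auto
      finally show ?thesis using term2 ep(2)[OF n1] unfolding dt_def by linarith
    qed
    hence "ennreal (\<Sum>j<n. dt * c j) \<le> ennreal \<eta>" by (rule ennreal_leI)
    finally show "(\<Sum>j<n. ennreal (T / real n) * (SUP q\<in>{q\<in>\<rat>. real j * (T / real n) \<le> q \<and> q < real (Suc j) * (T / real n)}.
             ennreal (norm (l q - l (real j * (T / real n)))))) \<le> ennreal \<eta>" unfolding dt_def .
  qed
qed



lemma osc_real:
  fixes l :: "real \<Rightarrow> 'b::real_normed_vector"
  assumes rc: "\<And>t. t \<in> {0..<T} \<Longrightarrow> (l \<longlongrightarrow> l t) (at_right t)"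
    and T: "T > 0" and n: "n \<ge> 1" and dt: "dt = T / real n" and eta: "\<eta> > 0"
    and S_def: "\<And>j. S j = (SUP q\<in>{q\<in>\<rat>. real j * dt \<le> q \<and> q < real (Suc j) * dt}. ennreal (norm (l q - l (real j * dt))))"
    and sm: "(\<Sum>j<n. ennreal dt * S j) \<le> ennreal \<eta>"
  shows "(\<forall>j<n. \<forall>s. real j * dt \<le> s \<and> s < real (Suc j) * dt \<longrightarrow> norm (l s - l (real j * dt)) \<le> enn2real (S j))
      \<and> (\<Sum>j<n. dt * enn2real (S j)) \<le> \<eta>"
proof -
  have dtp: "dt > 0" using T n dt by auto
  have ndt: "real n * dt = T" using n dt by auto
  have fin: "S j < top" if j: "j < n" for j
  proof (rule ccontr)
    assume "\<not> S j < top"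
    hence "S j = top" using top.not_eq_extremum by blast
    hence "ennreal dt * S j = top" using dtp by (simp add: ennreal_mult_eq_top_iff)
    moreover have "ennreal dt * S j \<le> (\<Sum>j<n. ennreal dt * S j)"
      using j by (intro member_le_sum) auto
    ultimately show False using sm by (metis ennreal_less_top leD top.extremum_uniqueI)
  qed
  have p1: "norm (l s - l (real j * dt)) \<le> enn2real (S j)"
    if j: "j < n" and s: "real j * dt \<le> s" "s < real (Suc j) * dt" for j s
  proof -
    have "real (Suc j) * dt \<le> real n * dt" using j dtp by (intro mult_right_mono) auto
    hence sT: "s < T" using s ndt by linarith
    have s0: "0 \<le> s" using s dtp by (smt (verit) mult_nonneg_nonneg of_nat_0_le_iff)
    show ?thesis
    proof (rule rc_rat_bound[OF rc s(2)])
      show "s \<in> {0..<T}" using s0 sT by auto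
      fix q assume q: "q \<in> \<rat>" "s < q" "q < real (Suc j) * dt"
      have "ennreal (norm (l q - l (real j * dt))) \<le> S j"
        unfolding S_def using q s by (intro SUP_upper) auto
      hence "enn2real (ennreal (norm (l q - l (real j * dt)))) \<le> enn2real (S j)"
        using fin[OF j] by (rule enn2real_mono)
      thus "norm (l q - l (real j * dt)) \<le> enn2real (S j)" by simp
    qed
  qed
  have "ennreal (\<Sum>j<n. dt * enn2real (S j)) = (\<Sum>j<n. ennreal (dt * enn2real (S j)))"
    using dtp by (intro sum_ennreal[symmetric]) auto
  also have "\<dots> = (\<Sum>j<n. ennreal dt * S j)"
    using dtp fin by (intro sum.cong) (auto simp: ennreal_mult)
  also have "\<dots> \<le> ennreal \<eta>" by (rule sm)
  finally have p2: "(\<Sum>j<n. dt * enn2real (S j)) \<le> \<eta>" using eta by simp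
  show ?thesis using p1 p2 by blast
qed



lemma meas_norm_gt:
  fixes g :: "'a \<Rightarrow> real^'n"
  assumes [measurable]: "g \<in> borel_measurable M"
  shows "{\<omega> \<in> space M. c < norm (g \<omega>)} \<in> sets M"
  by measurable

lemma meas_enn_norm_diff:
  fixes g h :: "'a \<Rightarrow> real^'n"
  assumes [measurable]: "g \<in> borel_measurable M" "h \<in> borel_measurable M"
  shows "(\<lambda>\<omega>. ennreal (norm (g \<omega> - h \<omega>))) \<in> borel_measurable M"
  by measurable

lemma meas_osc:
  fixes F :: "nat \<Rightarrow> real \<Rightarrow> 'a \<Rightarrow> ennreal"
  assumes F: "\<And>j q. q \<in> I j \<Longrightarrow> F j q \<in> borel_measurable M" and I: "\<And>j. countable (I j)"
  shows "(\<lambda>\<omega>. \<Sum>j<n. c * (SUP q\<in>I j. F j q \<omega>)) \<in> borel_measurable M"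
proof -
  have [measurable]: "(\<lambda>\<omega>. SUP q\<in>I j. F j q \<omega>) \<in> borel_measurable M" for j
    using F I by (intro borel_measurable_SUP) auto
  show ?thesis by measurable
qed

lemma meas_less_set:
  fixes F :: "'a \<Rightarrow> ennreal"
  assumes [measurable]: "F \<in> borel_measurable M"
  shows "{\<omega> \<in> space M. ennreal c < F \<omega>} \<in> sets M"
  by measurable

lemma small_prod:
  fixes x y d :: real
  assumes "0 \<le> x" "0 \<le> y" "y \<le> d / (5 * (x + 1))" "0 < d"
  shows "x * y \<le> d / 5"
proof -
  have "x * y \<le> (x + 1) * y" using assms by (simp add: algebra_simps)
  also have "\<dots> \<le> (x + 1) * (d / (5 * (x + 1)))" using assms by (intro mult_left_mono) auto
  also have "\<dots> = d / 5" using assms by (simp add: field_simps)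
  finally show ?thesis .
qed


lemma pos_frac5: fixes x d :: real assumes "0 \<le> x" "0 < d" shows "0 < d / (5 * (x + 1))"
  using assms by (intro divide_pos_pos) auto

theorem theorem2:
  fixes M :: "'a measure"
    and \<alpha> T :: real
    and x0 :: "real^'n"
    and L :: "real \<Rightarrow> 'a \<Rightarrow> real^'n"
    and f :: "real^'n \<Rightarrow> real^'n"
    and g0 :: real
    and Y :: "real \<Rightarrow> 'a \<Rightarrow> real^'n"
    and fm :: "nat \<Rightarrow> real^'n \<Rightarrow> real^'n"
    and gm :: "nat \<Rightarrow> real"
    and X :: "nat \<Rightarrow> real \<Rightarrow> real \<Rightarrow> 'a \<Rightarrow> real^'n"
  assumes alpha: "1 < \<alpha>" "\<alpha> < 2"
    and T_pos: "T > 0"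
    and levy: "sym_stable_levy_motion M \<alpha> L"
    and levy_cadlag: "\<forall>\<omega>\<in>space M. cadlag_on T (\<lambda>t. L t \<omega>)"
    and f_lip: "\<exists>C. C-lipschitz_on UNIV f"
    and Y_sol: "AE \<omega> in M. \<forall>t\<in>{0..T}.
                  ((\<lambda>s. f (Y s \<omega>)) has_integral (Y t \<omega> - x0 - g0 *\<^sub>R L t \<omega>)) {0..t}"
    and fm_lip: "\<exists>K>0. \<forall>m\<ge>1. \<forall>x1 x2. norm (fm m x1 - fm m x2) \<le> K * norm (x1 - x2)"
    and fm_L2: "\<forall>D. compact D \<longrightarrow>
                  (\<lambda>m. sqrt (LINT x:D|lborel. (norm (fm m x - f x))\<^sup>2)) \<longlonglongrightarrow> 0"
    and gm_conv: "gm \<longlonglongrightarrow> g0"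
    and X_EM: "\<forall>m\<ge>1. \<forall>dt. 0 < dt \<and> dt < 1 \<and> T / dt \<in> \<nat> \<longrightarrow>
                 (AE \<omega> in M. \<forall>t\<in>{0..T}.
                   ((\<lambda>s. fm m (X m dt (dt * of_int \<lfloor>s / dt\<rfloor>) \<omega>))
                      has_integral (X m dt t \<omega> - x0 - gm m *\<^sub>R L t \<omega>)) {0..t})"
  shows "\<forall>\<delta>>0. \<forall>\<epsilon>>0. \<exists>m0. \<exists>h>0. \<forall>m\<ge>m0. \<forall>dt.
           (0 < dt \<and> dt < 1 \<and> dt < h \<and> T / dt \<in> \<nat>) \<longrightarrow>
           (\<exists>A\<in>sets M. {\<omega>\<in>space M. skorokhod_dist T (\<lambda>t. Y t \<omega>) (\<lambda>t. X m dt t \<omega>) > \<delta>} \<subseteq> A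
                        \<and> measure M A < \<epsilon>)"
proof (intro allI impI)
  fix \<delta> \<epsilon> :: real assume \<delta>: "\<delta> > 0" and \<epsilon>: "\<epsilon> > 0"
  have PS: "prob_space M" and Lm: "\<And>t. t \<ge> 0 \<Longrightarrow> L t \<in> borel_measurable M"
    using levy unfolding sym_stable_levy_motion_def by auto
  interpret P: prob_space M by (rule PS)
  have cad: "\<And>\<omega>. \<omega> \<in> space M \<Longrightarrow> cadlag_on T (\<lambda>t. L t \<omega>)" using levy_cadlag by auto
  have rc: "\<And>\<omega> t. \<omega> \<in> space M \<Longrightarrow> t \<in> {0..<T} \<Longrightarrow> ((\<lambda>t. L t \<omega>) \<longlongrightarrow> L t \<omega>) (at_right t)"
    using cad unfolding cadlag_on_def by auto
  obtain C0 where C0: "C0-lipschitz_on UNIV f" using f_lip by blast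
  define C where "C = max C0 1"
  have Cp: "C > 0" unfolding C_def by simp
  have flip: "norm (f x - f y) \<le> C * norm (x - y)" for x y
  proof -
    have "dist (f x) (f y) \<le> C0 * dist x y" using lipschitz_onD[OF C0] by auto
    also have "\<dots> \<le> C * dist x y" unfolding C_def by (intro mult_right_mono) auto
    finally show ?thesis by (simp add: dist_norm)
  qed
  obtain K where K: "K > 0" and fmK: "\<And>m x1 x2. m \<ge> 1 \<Longrightarrow> norm (fm m x1 - fm m x2) \<le> K * norm (x1 - x2)"
    using fm_lip by blast
  have "Bseq gm" using gm_conv by (intro convergent_imp_Bseq) (auto simp: convergent_def)
  then obtain G where Gp: "G > 0" and G': "\<forall>m. norm (gm m) \<le> G" by (rule BseqE)
  have G: "\<bar>gm m\<bar> \<le> G" for m using G' by simp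
  have uc: "\<exists>m0\<ge>1. \<forall>m\<ge>m0. \<forall>x. norm x \<le> R \<longrightarrow> norm (f x - fm m x) \<le> e" if e: "e > 0" for R e :: real
  proof -
    have L2: "(\<lambda>m. sqrt (LINT x:cball 0 (R+1)|lborel. (norm (fm m x - f x))\<^sup>2)) \<longlonglongrightarrow> 0"
      using fm_L2 by auto
    show ?thesis by (rule unif_conv[OF Cp flip K fmK L2 e])
  qed
  obtain mF where mF: "mF \<ge> 1" "\<And>m x. m \<ge> mF \<Longrightarrow> norm x \<le> 0 \<Longrightarrow> norm (f x - fm m x) \<le> 1"
    using uc[of 1 0] by auto
  define F0 where "F0 = norm (f 0) + 1"
  have F0: "norm (fm m 0) \<le> F0" if "m \<ge> mF" for m
  proof -
    have "norm (fm m 0) \<le> norm (f 0) + norm (fm m 0 - f 0)" by (rule norm_triangle_sub)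
    moreover have "norm (fm m 0 - f 0) \<le> 1" using mF(2)[OF that, of 0] by (simp add: norm_minus_commute)
    ultimately show ?thesis unfolding F0_def by simp
  qed
  have F00: "F0 \<ge> 0" unfolding F0_def by simp
  define Xeq where "Xeq = (\<lambda>m dt \<omega>. \<forall>t\<in>{0..T}. ((\<lambda>s. fm m (X m dt (dt * of_int \<lfloor>s / dt\<rfloor>) \<omega>))
                      has_integral (X m dt t \<omega> - x0 - gm m *\<^sub>R L t \<omega>)) {0..t})"
  define Yeq where "Yeq = (\<lambda>\<omega>. \<forall>t\<in>{0..T}. ((\<lambda>s. f (Y s \<omega>)) has_integral (Y t \<omega> - x0 - g0 *\<^sub>R L t \<omega>)) {0..t})"
  have AEX1: "AE \<omega> in M. (m \<ge> 1 \<and> n \<ge> 1 \<and> T / real n < 1) \<longrightarrow> Xeq m (T / real n) \<omega>" for m n :: nat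
  proof (cases "m \<ge> 1 \<and> n \<ge> 1 \<and> T / real n < 1")
    case True
    have "T / (T / real n) = real n" using T_pos True by simp
    hence "T / (T / real n) \<in> \<nat>" by simp
    moreover have "0 < T / real n" using T_pos True by simp
    ultimately have "AE \<omega> in M. Xeq m (T / real n) \<omega>" using X_EM True unfolding Xeq_def by blast
    thus ?thesis using True by simp
  next
    case False thus ?thesis by (intro AE_I2) blast
  qed
  have AEX: "AE \<omega> in M. \<forall>m::nat. \<forall>n::nat. (m \<ge> 1 \<and> n \<ge> 1 \<and> T / real n < 1) \<longrightarrow> Xeq m (T / real n) \<omega>"
    using AEX1 by (simp add: AE_all_countable)
  have AEall: "AE \<omega> in M. Yeq \<omega> \<and> (\<forall>m::nat. \<forall>n::nat. (m \<ge> 1 \<and> n \<ge> 1 \<and> T / real n < 1) \<longrightarrow> Xeq m (T / real n) \<omega>)"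
    using Y_sol AEX unfolding Yeq_def by (rule AE_conjI)
  obtain N where N: "{\<omega> \<in> space M. \<not> (Yeq \<omega> \<and> (\<forall>m::nat. \<forall>n::nat. (m \<ge> 1 \<and> n \<ge> 1 \<and> T / real n < 1) \<longrightarrow> Xeq m (T / real n) \<omega>))} \<subseteq> N"
      "emeasure M N = 0" "N \<in> sets M"
    using AEall by (rule AE_E)
  have mN: "measure M N = 0" using N(2) by (simp add: measure_def)
  define Qs where "Qs = {q \<in> \<rat>. 0 \<le> q \<and> q < T}"
  have cQs: "countable Qs" unfolding Qs_def by (rule countable_subset[OF _ countable_rat]) auto
  define Eb where "Eb = (\<lambda>k::nat. {\<omega> \<in> space M. real k < norm (L T \<omega>)} \<union> (\<Union>q\<in>Qs. {\<omega> \<in> space M. real k < norm (L q \<omega>)}))"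
  have Eb_sets: "Eb k \<in> sets M" for k
  proof -
    have "{\<omega> \<in> space M. real k < norm (L T \<omega>)} \<in> sets M"
      by (rule meas_norm_gt[OF Lm]) (use T_pos in simp)
    moreover have "(\<Union>q\<in>Qs. {\<omega> \<in> space M. real k < norm (L q \<omega>)}) \<in> sets M"
      using cQs by (intro sets.countable_UN') (auto simp: Qs_def intro!: meas_norm_gt[OF Lm])
    ultimately show ?thesis unfolding Eb_def by auto
  qed
  have Eb_lim: "(\<lambda>k. measure M (Eb k)) \<longlonglongrightarrow> measure M (\<Inter>k. Eb k)"
  proof (rule P.finite_Lim_measure_decseq)
    show "range Eb \<subseteq> sets M" using Eb_sets by auto
    show "decseq Eb" unfolding decseq_def Eb_def
      by (auto dest: le_less_trans[OF of_nat_mono[where 'a=real]])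
  qed
  have Eb_int: "(\<Inter>k. Eb k) = {}"
  proof (rule ccontr)
    assume "(\<Inter>k. Eb k) \<noteq> {}"
    then obtain \<omega> where w: "\<And>k. \<omega> \<in> Eb k" by blast
    hence ws: "\<omega> \<in> space M" unfolding Eb_def by blast
    obtain Bw where Bw: "\<forall>t\<in>{0..T}. norm (L t \<omega>) \<le> Bw" using cadlag_bounded[OF cad[OF ws] T_pos] by blast
    define k where "k = nat \<lceil>Bw\<rceil>"
    have Bk: "Bw \<le> real k" unfolding k_def by linarith
    have "norm (L T \<omega>) \<le> Bw" using Bw T_pos by simp
    hence h1: "norm (L T \<omega>) \<le> real k" using Bk by linarith
    have h2: "\<forall>q\<in>Qs. norm (L q \<omega>) \<le> real k"
    proof
      fix q assume "q \<in> Qs"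
      hence "norm (L q \<omega>) \<le> Bw" using Bw unfolding Qs_def by simp
      thus "norm (L q \<omega>) \<le> real k" using Bk by linarith
    qed
    have "\<omega> \<notin> Eb k" unfolding Eb_def using h1 h2 by (auto simp: not_less)
    thus False using w by blast
  qed
  obtain k where k: "measure M (Eb k) < \<epsilon> / 2"
  proof -
    have "eventually (\<lambda>k. measure M (Eb k) < \<epsilon> / 2) sequentially"
      using Eb_lim \<epsilon> unfolding Eb_int by (intro order_tendstoD(2)) auto
    thus ?thesis using that by (auto simp: eventually_sequentially)
  qed
  define B where "B = real k"
  have B0: "B \<ge> 0" unfolding B_def by simp
  have lB: "norm (L t \<omega>) \<le> B" if w: "\<omega> \<in> space M" "\<omega> \<notin> Eb k" and t: "t \<in> {0..T}" for \<omega> t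
  proof (cases "t = T")
    case True thus ?thesis using w unfolding Eb_def B_def by auto
  next
    case False
    hence tT: "t < T" using t by auto
    have "norm (L t \<omega> - 0) \<le> B"
    proof (rule rc_rat_bound[OF rc[OF w(1)] tT])
      show "t \<in> {0..<T}" using t tT by auto
      fix q assume q: "q \<in> \<rat>" "t < q" "q < T"
      hence "q \<in> Qs" unfolding Qs_def using t by auto
      thus "norm (L q \<omega> - 0) \<le> B" using w unfolding Eb_def B_def by auto
    qed
    thus ?thesis by simp
  qed
  define E where "E = exp (C * T)"
  have E0: "E > 0" unfolding E_def by simp
  define Mf where "Mf = 2 * (norm (f 0) + C * (norm x0 + \<bar>g0\<bar> * B)) * exp (2 * C * T)"
  have Mf0: "Mf \<ge> 0" unfolding Mf_def using Cp B0 by simp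
  define RX where "RX = (norm x0 + G * B + T * F0) * exp (K * T)"
  have RX0: "RX \<ge> 0" unfolding RX_def using Gp B0 T_pos F00 by simp
  define \<eta> where "\<eta> = \<delta> / (5 * (C * \<bar>g0\<bar> * E + 1))"
  have \<eta>0: "\<eta> > 0" unfolding \<eta>_def using \<delta> Cp E0 by (intro pos_frac5) auto
  define ef where "ef = \<delta> / (5 * (T * E + 1))"
  have ef0: "ef > 0" unfolding ef_def using \<delta> T_pos E0 by (intro pos_frac5) auto
  define tolg where "tolg = \<delta> / (5 * (B * E + 2 * B + 1))"
  have tolg0: "tolg > 0" unfolding tolg_def using \<delta> B0 E0 by (intro pos_frac5) auto
  define h1 where "h1 = \<delta> / (5 * (T * C * Mf * E + Mf + F0 + K * RX + 1))"
  have h10: "h1 > 0" unfolding h1_def using \<delta> T_pos Cp Mf0 E0 F00 K RX0 by (intro pos_frac5) auto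
  define Qc where "Qc = (\<lambda>(n::nat) (j::nat). {q \<in> \<rat>. real j * (T / real n) \<le> q \<and> q < real (Suc j) * (T / real n)})"
  define Osc where "Osc = (\<lambda>(n::nat) \<omega>. \<Sum>j<n. ennreal (T / real n) *
       (SUP q\<in>Qc n j. ennreal (norm (L q \<omega> - L (real j * (T / real n)) \<omega>))))"
  have Osc_meas: "Osc n \<in> borel_measurable M" for n
    unfolding Osc_def
  proof (rule meas_osc)
    fix j q assume "q \<in> Qc n j"
    hence q0: "q \<ge> 0" unfolding Qc_def using T_pos by (smt (verit) mem_Collect_eq mult_nonneg_nonneg of_nat_0_le_iff divide_nonneg_nonneg)
    have j0: "real j * (T / real n) \<ge> 0" using T_pos by simp
    show "(\<lambda>\<omega>. ennreal (norm (L q \<omega> - L (real j * (T / real n)) \<omega>))) \<in> borel_measurable M"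
      by (rule meas_enn_norm_diff[OF Lm[OF q0] Lm[OF j0]])
  next
    fix j show "countable (Qc n j)" unfolding Qc_def by (rule countable_subset[OF _ countable_rat]) auto
  qed
  define Hv where "Hv = (\<lambda>n0::nat. \<Union>n\<in>{n0..}. {\<omega> \<in> space M. ennreal \<eta> < Osc n \<omega>})"
  have Hv_sets: "Hv n0 \<in> sets M" for n0
    unfolding Hv_def by (intro sets.countable_UN') (auto intro: meas_less_set[OF Osc_meas])
  have Hv_lim: "(\<lambda>n0. measure M (Hv n0)) \<longlonglongrightarrow> measure M (\<Inter>n0. Hv n0)"
  proof (rule P.finite_Lim_measure_decseq)
    show "range Hv \<subseteq> sets M" using Hv_sets by auto
    show "decseq Hv" unfolding decseq_def Hv_def by (auto intro: order_trans)
  qed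
  have Hv_int: "(\<Inter>n0. Hv n0) = {}"
  proof (rule ccontr)
    assume "(\<Inter>n0. Hv n0) \<noteq> {}"
    then obtain \<omega> where w: "\<And>n0. \<omega> \<in> Hv n0" by blast
    hence ws: "\<omega> \<in> space M" unfolding Hv_def by blast
    obtain Nw where Nw: "\<forall>n\<ge>Nw. (\<Sum>j<n. ennreal (T / real n) * (SUP q\<in>{q\<in>\<rat>. real j * (T / real n) \<le> q \<and> q < real (Suc j) * (T / real n)}.
             ennreal (norm (L q \<omega> - L (real j * (T / real n)) \<omega>)))) \<le> ennreal \<eta>"
      using osc_small[OF cad[OF ws] T_pos \<eta>0] by blast
    have "\<omega> \<in> Hv Nw" by (rule w)
    then obtain n where "n \<ge> Nw" "ennreal \<eta> < Osc n \<omega>" unfolding Hv_def by auto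
    thus False using Nw unfolding Osc_def Qc_def by (auto simp: not_less[symmetric])
  qed
  obtain n0 where n0: "measure M (Hv n0) < \<epsilon> / 2"
  proof -
    have "eventually (\<lambda>n0. measure M (Hv n0) < \<epsilon> / 2) sequentially"
      using Hv_lim \<epsilon> unfolding Hv_int by (intro order_tendstoD(2)) auto
    thus ?thesis using that by (auto simp: eventually_sequentially)
  qed
  obtain mA where mA: "mA \<ge> 1" "\<And>m x. m \<ge> mA \<Longrightarrow> norm x \<le> RX \<Longrightarrow> norm (f x - fm m x) \<le> ef"
    using uc[OF ef0, of RX] by auto
  obtain mg where mg: "\<And>m. m \<ge> mg \<Longrightarrow> \<bar>g0 - gm m\<bar> \<le> tolg"
  proof -
    have "\<exists>no. \<forall>m\<ge>no. norm (gm m - g0) < tolg" using gm_conv tolg0 unfolding LIMSEQ_iff by blast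
    then obtain no where "\<forall>m\<ge>no. norm (gm m - g0) < tolg" by blast
    thus ?thesis using that by (metis abs_minus_commute less_imp_le real_norm_def)
  qed
  define m0 where "m0 = max (max mA mF) mg"
  define n1 where "n1 = max n0 1"
  have n1p: "real n1 > 0" unfolding n1_def by simp
  define h where "h = min h1 (T / real n1)"
  show "\<exists>m0. \<exists>h>0. \<forall>m\<ge>m0. \<forall>dt. (0 < dt \<and> dt < 1 \<and> dt < h \<and> T / dt \<in> \<nat>) \<longrightarrow>
           (\<exists>A\<in>sets M. {\<omega>\<in>space M. skorokhod_dist T (\<lambda>t. Y t \<omega>) (\<lambda>t. X m dt t \<omega>) > \<delta>} \<subseteq> A
                        \<and> measure M A < \<epsilon>)"
  proof (intro exI[of _ m0] exI[of _ h] conjI allI impI)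
    show "h > 0" unfolding h_def using h10 T_pos n1p by simp
    fix m dt assume m: "m0 \<le> m" and dtc: "0 < dt \<and> dt < 1 \<and> dt < h \<and> T / dt \<in> \<nat>"
    have m1: "m \<ge> 1" "m \<ge> mA" "m \<ge> mF" "m \<ge> mg" using m mA(1) unfolding m0_def by auto
    obtain nn where nn: "T / dt = real nn" using dtc Nats_cases by metis
    have "real nn > 0" using nn dtc T_pos by (metis divide_pos_pos)
    hence nn1: "nn \<ge> 1" by simp
    have dtdef: "dt = T / real nn" using nn dtc T_pos nn1 by (auto simp: field_simps)
    have nnn0: "nn \<ge> n0"
    proof -
      have "dt < T / real n1" using dtc unfolding h_def by simp
      hence "T / real nn < T / real n1" using dtdef by simp
      hence lt: "T / real nn < T / real n1" .
      have "real n1 < real nn"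
      proof (rule ccontr)
        assume "\<not> real n1 < real nn"
        hence "real nn \<le> real n1" by simp
        hence "T / real n1 \<le> T / real nn" using T_pos nn1 n1p by (intro divide_left_mono) auto
        thus False using lt by linarith
      qed
      thus ?thesis unfolding n1_def by simp
    qed
    define A where "A = N \<union> Eb k \<union> Hv n0"
    show "\<exists>A\<in>sets M. {\<omega>\<in>space M. skorokhod_dist T (\<lambda>t. Y t \<omega>) (\<lambda>t. X m dt t \<omega>) > \<delta>} \<subseteq> A
                        \<and> measure M A < \<epsilon>"
    proof (intro bexI[of _ A] conjI)
      show As: "A \<in> sets M" unfolding A_def using N(3) Eb_sets Hv_sets by auto
      have "measure M A \<le> measure M (N \<union> Eb k) + measure M (Hv n0)"
        unfolding A_def using N(3) Eb_sets Hv_sets by (intro measure_Un_le) auto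
      also have "measure M (N \<union> Eb k) \<le> measure M N + measure M (Eb k)"
        using N(3) Eb_sets by (intro measure_Un_le) auto
      finally show "measure M A < \<epsilon>" using mN k n0 by linarith
      show "{\<omega>\<in>space M. skorokhod_dist T (\<lambda>t. Y t \<omega>) (\<lambda>t. X m dt t \<omega>) > \<delta>} \<subseteq> A"
      proof (rule subsetI, rule ccontr)
        fix \<omega> assume w: "\<omega> \<in> {\<omega>\<in>space M. skorokhod_dist T (\<lambda>t. Y t \<omega>) (\<lambda>t. X m dt t \<omega>) > \<delta>}"
          and nA: "\<omega> \<notin> A"
        have ws: "\<omega> \<in> space M" and big: "skorokhod_dist T (\<lambda>t. Y t \<omega>) (\<lambda>t. X m dt t \<omega>) > \<delta>" using w by auto
        have good: "Yeq \<omega>" "\<And>m n. m \<ge> 1 \<Longrightarrow> n \<ge> 1 \<Longrightarrow> T / real n < 1 \<Longrightarrow> Xeq m (T / real n) \<omega>"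
          using N(1) nA ws unfolding A_def by blast+
        have XeqW: "Xeq m dt \<omega>" using good(2)[OF m1(1) nn1] dtc dtdef by simp
        have lBw: "\<And>t. t \<in> {0..T} \<Longrightarrow> norm (L t \<omega>) \<le> B" using lB ws nA unfolding A_def by blast
        have oscle: "Osc nn \<omega> \<le> ennreal \<eta>" using nA nnn0 ws unfolding A_def Hv_def by (auto simp: not_less[symmetric])
        define S where "S = (\<lambda>j. SUP q\<in>{q\<in>\<rat>. real j * dt \<le> q \<and> q < real (Suc j) * dt}. ennreal (norm (L q \<omega> - L (real j * dt) \<omega>)))"
        have OR: "(\<forall>j<nn. \<forall>s. real j * dt \<le> s \<and> s < real (Suc j) * dt \<longrightarrow> norm (L s \<omega> - L (real j * dt) \<omega>) \<le> enn2real (S j))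
            \<and> (\<Sum>j<nn. dt * enn2real (S j)) \<le> \<eta>"
        proof (rule osc_real[where l="\<lambda>t. L t \<omega>", OF rc[OF ws] T_pos nn1 dtdef \<eta>0])
          show "S j = (SUP q\<in>{q\<in>\<rat>. real j * dt \<le> q \<and> q < real (Suc j) * dt}. ennreal (norm (L q \<omega> - L (real j * dt) \<omega>)))" for j
            unfolding S_def ..
          show "(\<Sum>j<nn. ennreal dt * S j) \<le> ennreal \<eta>"
            using oscle unfolding Osc_def Qc_def S_def dtdef .
        qed
        have CORE: "\<forall>t\<in>{0..T}. norm (Y t \<omega> - X m dt t \<omega>) \<le>
              (\<bar>g0 - gm m\<bar> * B + C * \<bar>g0\<bar> * \<eta> + T * (C * dt * Mf + ef)) * exp (C * T) + 2 * \<bar>g0 - gm m\<bar> * B + dt * (Mf + F0 + K * RX)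
             \<and> norm (X m dt t \<omega>) \<le> RX + 2 * G * B + dt * (F0 + K * RX)"
        proof (rule core[where l="\<lambda>t. L t \<omega>" and Y="\<lambda>t. Y t \<omega>" and X="\<lambda>t. X m dt t \<omega>" and fm="fm m" and gm="gm m"
              and Os="\<lambda>j. enn2real (S j)", OF T_pos nn1 dtdef _ Cp flip K _ F0[OF m1(3)] G])
          show "\<And>t. t \<in> {0..T} \<Longrightarrow> norm (L t \<omega>) \<le> B" by (rule lBw)
          show "\<And>x y. norm (fm m x - fm m y) \<le> K * norm (x - y)" using fmK[OF m1(1)] by blast
          show "\<And>t. t \<in> {0..T} \<Longrightarrow> ((\<lambda>s. f (Y s \<omega>)) has_integral (Y t \<omega> - x0 - g0 *\<^sub>R L t \<omega>)) {0..t}"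
            using good(1) unfolding Yeq_def by blast
          show "\<And>t. t \<in> {0..T} \<Longrightarrow> ((\<lambda>s. fm m (X m dt (dt * of_int \<lfloor>s / dt\<rfloor>) \<omega>)) has_integral (X m dt t \<omega> - x0 - gm m *\<^sub>R L t \<omega>)) {0..t}"
            using XeqW unfolding Xeq_def by blast
          show "\<And>x. norm x \<le> (norm x0 + G * B + T * F0) * exp (K * T) \<Longrightarrow> norm (f x - fm m x) \<le> ef"
            using mA(2)[OF m1(2)] unfolding RX_def by blast
          show "\<And>j s. j < nn \<Longrightarrow> real j * dt \<le> s \<Longrightarrow> s < real (Suc j) * dt \<Longrightarrow> norm (L s \<omega> - L (real j * dt) \<omega>) \<le> enn2real (S j)"
            using OR by blast
          show "(\<Sum>j<nn. dt * enn2real (S j)) \<le> \<eta>" using OR by blast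
        qed (simp_all add: Mf_def RX_def)
        define Bnd where "Bnd = (\<bar>g0 - gm m\<bar> * B + C * \<bar>g0\<bar> * \<eta> + T * (C * dt * Mf + ef)) * exp (C * T) + 2 * \<bar>g0 - gm m\<bar> * B + dt * (Mf + F0 + K * RX)"
        have "skorokhod_dist T (\<lambda>t. Y t \<omega>) (\<lambda>t. X m dt t \<omega>) \<le> Bnd"
        proof (rule skor_le)
          show "0 \<le> T" using T_pos by simp
          fix t assume t: "t \<in> {0..T}"
          show "norm (X m dt t \<omega>) \<le> RX + 2 * G * B + dt * (F0 + K * RX)" using CORE t by blast
          show "norm (Y t \<omega> - X m dt t \<omega>) \<le> Bnd" using CORE t unfolding Bnd_def by blast
          have "norm (Y t \<omega>) \<le> norm (Y t \<omega> - X m dt t \<omega>) + norm (X m dt t \<omega>)" using norm_triangle_sub[of "Y t \<omega>" "X m dt t \<omega>"] by linarith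
          thus "norm (Y t \<omega>) \<le> Bnd + (RX + 2 * G * B + dt * (F0 + K * RX))" using CORE t unfolding Bnd_def by fastforce
        qed
        moreover have "Bnd \<le> \<delta>"
        proof -
          have eqB: "Bnd = \<bar>g0 - gm m\<bar> * (B * E + 2 * B) + (C * \<bar>g0\<bar> * E) * \<eta> + (T * E) * ef
                + (T * C * Mf * E + Mf + F0 + K * RX) * dt"
            unfolding Bnd_def E_def by (simp add: algebra_simps)
          have 1: "(B * E + 2 * B) * \<bar>g0 - gm m\<bar> \<le> \<delta> / 5"
            by (rule small_prod) (use B0 E0 mg[OF m1(4)] \<delta> in \<open>auto simp: tolg_def\<close>)
          have 2: "(C * \<bar>g0\<bar> * E) * \<eta> \<le> \<delta> / 5"
            by (rule small_prod) (use Cp E0 \<eta>0 \<delta> in \<open>auto simp: \<eta>_def\<close>)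
          have 3: "(T * E) * ef \<le> \<delta> / 5"
            by (rule small_prod) (use T_pos E0 ef0 \<delta> in \<open>auto simp: ef_def\<close>)
          have dth: "dt \<le> h1" using dtc unfolding h_def by simp
          have 4: "(T * C * Mf * E + Mf + F0 + K * RX) * dt \<le> \<delta> / 5"
            by (rule small_prod) (use T_pos Cp Mf0 E0 F00 K RX0 dtc dth \<delta> in \<open>auto simp: h1_def\<close>)
          show ?thesis unfolding eqB using 1 2 3 4 \<delta> by (simp add: mult.commute)
        qed
        ultimately show False using big by linarith
      qed
    qed
  qed
qed

end
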